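(* Let $n\geqslant 1$ and let $G_n$ be the complete directed graph on $n$ vertices. Then $\Delta(G_n)$ is the union of a family of $(n-1)^{n-1}$ subcomplexes, each of which is a simplicial sphere of dimension $n-2$; moreover, for each $0<k<n$, exactly $$\frac{(n-1)!}{(n-k-1)!}\,k\,(n-1)^{n-k-2}$$ members of this family are (combinatorially) the $(n-k-1)$-fold bipyramid over the boundary of the $k$-simplex.
   Context: $G_n$ has vertex set $[n]$ and a directed edge $\overrightarrow{xy}$ for every ordered pair $x\neq y$. For a finite directed graph $D$, the complex of directed trees $\Delta(D)$ has the directed edges of $D$ as vertices, and its faces are the edge sets of directed forests in $D$ (vertex-disjoint unions of rooted directed trees; equivalently, edge sets in which every vertex has in-degree at most $1$ and there is no directed cycle). For a simplicial complex $K$ and $m\geqslant 0$, the $m$-fold bipyramid over $K$ is the join $K*S^0*\cdots*S^0$ with $m$ copies of $S^0$, where $S^0$ denotes the complex consisting of two vertices and no edge; the boundary of the $k$-simplex is the complex of all proper subsets of a $(k+1)$-element set. *)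

theory Defs
  imports "HOL-Analysis.Analysis"
begin

text \<open>Abstract simplicial complexes are represented by their set of faces
  (a downward closed family of finite sets, containing the empty face).\<close>

definition simplicial_complex :: "'a set set \<Rightarrow> bool" where
  "simplicial_complex K \<longleftrightarrow> K \<noteq> {} \<and> (\<forall>\<sigma>\<in>K. finite \<sigma>) \<and> (\<forall>\<sigma>\<in>K. \<forall>\<tau>. \<tau> \<subseteq> \<sigma> \<longrightarrow> \<tau> \<in> K)"

definition subcomplex :: "'a set set \<Rightarrow> 'a set set \<Rightarrow> bool" where
  "subcomplex L K \<longleftrightarrow> simplicial_complex L \<and> L \<subseteq> K"

text \<open>Geometric realization: points are barycentric coordinate functions
  whose support is a face; topology induced from the product topology.\<close>

definition realization :: "'a set set \<Rightarrow> ('a \<Rightarrow> real) topology" where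
  "realization K = subtopology (powertop_real UNIV)
     {f. (\<forall>v. 0 \<le> f v) \<and> finite {v. f v \<noteq> 0} \<and> {v. f v \<noteq> 0} \<in> K
         \<and> sum f {v. f v \<noteq> 0} = 1}"

text \<open>Simplicial sphere of dimension d (d = -1 allowed: the complex with only
  the empty face).\<close>

definition simplicial_sphere :: "'a set set \<Rightarrow> int \<Rightarrow> bool" where
  "simplicial_sphere K d \<longleftrightarrow> simplicial_complex K \<and>
     (if d < 0 then d = -1 \<and> K = {{}}
      else realization K homeomorphic_space nsphere (nat d))"

definition simp_iso :: "'a set set \<Rightarrow> 'b set set \<Rightarrow> bool" where
  "simp_iso K L \<longleftrightarrow> (\<exists>f. inj_on f (\<Union>K) \<and> (\<lambda>\<sigma>. f ` \<sigma>) ` K = L)"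

definition complete_digraph_edges :: "nat \<Rightarrow> (nat \<times> nat) set" where
  "complete_digraph_edges n = {(x, y). x \<in> {1..n} \<and> y \<in> {1..n} \<and> x \<noteq> y}"

definition directed_forest :: "(nat \<times> nat) set \<Rightarrow> bool" where
  "directed_forest E \<longleftrightarrow> (\<forall>x x' y. (x, y) \<in> E \<and> (x', y) \<in> E \<longrightarrow> x = x') \<and> acyclic E"

definition tree_complex :: "nat \<Rightarrow> (nat \<times> nat) set set" where
  "tree_complex n = {E. E \<subseteq> complete_digraph_edges n \<and> directed_forest E}"

definition simplex_boundary :: "nat \<Rightarrow> nat set set" where
  "simplex_boundary k = {\<sigma>. \<sigma> \<subset> {0..k}}"

definition join :: "'a set set \<Rightarrow> 'b set set \<Rightarrow> ('a + 'b) set set" where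
  "join K L = {Inl ` \<sigma> \<union> Inr ` \<tau> | \<sigma> \<tau>. \<sigma> \<in> K \<and> \<tau> \<in> L}"

text \<open>The m-fold join S^0 * ... * S^0: the i-th copy of S^0 has vertices (i,True), (i,False).\<close>

definition iterated_S0_join :: "nat \<Rightarrow> (nat \<times> bool) set set" where
  "iterated_S0_join m = {B. B \<subseteq> {..<m} \<times> UNIV \<and> (\<forall>i. \<not> ((i, True) \<in> B \<and> (i, False) \<in> B))}"

definition bipyramid :: "'a set set \<Rightarrow> nat \<Rightarrow> ('a + nat \<times> bool) set set" where
  "bipyramid K m = join K (iterated_S0_join m)"

end

theory Submission
  imports Defs "HOL-Library.FuncSet"
begin


fun mx :: "(nat \<Rightarrow> real) \<Rightarrow> nat \<Rightarrow> real" where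
  "mx g 0 = g 0"
| "mx g (Suc k) = max (mx g k) (g (Suc k))"

lemma mx_ge: "j \<le> k \<Longrightarrow> g j \<le> mx g k"
  by (induction k) (auto simp: le_Suc_eq max.coboundedI1)

lemma mx_att: "\<exists>j\<le>k. mx g k = g j"
proof (induction k)
  case 0 then show ?case by auto
next
  case (Suc k)
  then obtain j where "j \<le> k" "mx g k = g j" by auto
  then show ?case by (cases "mx g k \<le> g (Suc k)") (auto simp: max_def intro: le_SucI)
qed

lemma mx_cong: "(\<And>j. j \<le> k \<Longrightarrow> g j = g' j) \<Longrightarrow> mx g k = mx g' k"
  by (induction k) auto

lemma mx_scale: "(c::real) > 0 \<Longrightarrow> mx (\<lambda>j. g j / c) k = mx g k / c"
  by (induction k) (auto simp: max_def divide_le_cancel)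

lemma mx_cont:
  assumes "\<And>j. continuous_map X euclideanreal (\<lambda>x. g x j)"
  shows "continuous_map X euclideanreal (\<lambda>x. mx (g x) k)"
  by (induction k) (auto intro!: continuous_map_real_max assms)

lemma mx_zero: "mx (\<lambda>j. 0) k = 0"
  by (induction k) auto

definition RC :: "'a set set \<Rightarrow> ('a \<Rightarrow> real) set" where
  "RC K = {f. (\<forall>v. 0 \<le> f v) \<and> finite {v. f v \<noteq> 0} \<and> {v. f v \<noteq> 0} \<in> K
         \<and> sum f {v. f v \<noteq> 0} = 1}"

lemma realization_RC: "realization K = subtopology (powertop_real UNIV) (RC K)"
  unfolding realization_def RC_def by simp

lemma topspace_realization: "topspace (realization K) = RC K"
  unfolding realization_RC by simp

lemma proj_cont: "continuous_map (subtopology (powertop_real UNIV) S) euclideanreal (\<lambda>x. x v)"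
  by (rule continuous_map_from_subtopology[OF continuous_map_product_projection]) simp

lemma sum_set_split: "(S :: ('a + 'b) set) = Inl ` {a. Inl a \<in> S} \<union> Inr ` {b. Inr b \<in> S}"
  by (auto simp: image_iff) (metis sum.exhaust)

lemma bip_mem:
  "S \<in> bipyramid (simplex_boundary k) m \<longleftrightarrow>
     (\<forall>j. Inl j \<in> S \<longrightarrow> j \<le> k) \<and> (\<exists>j\<le>k. Inl j \<notin> S) \<and>
     (\<forall>i b. Inr (i,b) \<in> S \<longrightarrow> i < m) \<and> (\<forall>i. \<not> (Inr (i,True) \<in> S \<and> Inr (i,False) \<in> S))"
  (is "?L \<longleftrightarrow> ?R")
proof
  assume ?L
  then obtain \<sigma> \<tau> where S: "S = Inl ` \<sigma> \<union> Inr ` \<tau>" and "\<sigma> \<subset> {0..k}" "\<tau> \<in> iterated_S0_join m"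
    unfolding bipyramid_def join_def simplex_boundary_def by auto
  then show ?R unfolding iterated_S0_join_def by auto
next
  assume R: ?R
  have "S = Inl ` {a. Inl a \<in> S} \<union> Inr ` {b. Inr b \<in> S}" by (rule sum_set_split)
  moreover have "{a. Inl a \<in> S} \<in> simplex_boundary k"
    using R unfolding simplex_boundary_def by auto
  moreover have "{b. Inr b \<in> S} \<in> iterated_S0_join m"
    using R unfolding iterated_S0_join_def by auto
  ultimately show ?L unfolding bipyramid_def join_def by blast
qed


section \<open>Coordinates for the bipyramid\<close>

definition sC :: "nat \<Rightarrow> (nat + nat \<times> bool \<Rightarrow> real) \<Rightarrow> real" where
  "sC k f = (\<Sum>j\<le>k. f (Inl j))"

definition Phr :: "nat \<Rightarrow> nat \<Rightarrow> (nat + nat \<times> bool \<Rightarrow> real) \<Rightarrow> nat \<Rightarrow> real" where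
  "Phr k m f c = (if c < k then f (Inl (Suc c)) - sC k f / (k+1)
                  else if c < k + m then f (Inr (c-k, True)) - f (Inr (c-k, False)) else 0)"

definition nrm :: "nat \<Rightarrow> (nat \<Rightarrow> real) \<Rightarrow> real" where
  "nrm d x = sqrt (\<Sum>c<d. (x c)^2)"

definition Ph :: "nat \<Rightarrow> nat \<Rightarrow> (nat + nat \<times> bool \<Rightarrow> real) \<Rightarrow> nat \<Rightarrow> real" where
  "Ph k m f = (\<lambda>c. Phr k m f c / nrm (k+m) (Phr k m f))"

definition yv :: "nat \<Rightarrow> (nat \<Rightarrow> real) \<Rightarrow> nat \<Rightarrow> real" where
  "yv k x j = (if j = 0 then - (\<Sum>c<k. x c) else x (j - 1))"

definition MM :: "nat \<Rightarrow> (nat \<Rightarrow> real) \<Rightarrow> real" where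
  "MM k x = mx (\<lambda>j. - yv k x j) k"

definition hh :: "nat \<Rightarrow> nat \<Rightarrow> (nat \<Rightarrow> real) \<Rightarrow> real" where
  "hh k m x = real (k+1) * MM k x + (\<Sum>i<m. \<bar>x (k+i)\<bar>)"

definition Psr :: "nat \<Rightarrow> nat \<Rightarrow> (nat \<Rightarrow> real) \<Rightarrow> nat + nat \<times> bool \<Rightarrow> real" where
  "Psr k m x v = (case v of Inl j \<Rightarrow> if j \<le> k then yv k x j + MM k x else 0
                   | Inr (i,b) \<Rightarrow> if i < m then (if b then max (x (k+i)) 0 else max (- x (k+i)) 0) else 0)"

definition Ps :: "nat \<Rightarrow> nat \<Rightarrow> (nat \<Rightarrow> real) \<Rightarrow> nat + nat \<times> bool \<Rightarrow> real" where
  "Ps k m x = (\<lambda>v. Psr k m x v / hh k m x)"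

lemma yv_sum: "(\<Sum>j\<le>k. yv k x j) = 0"
proof -
  have "(\<Sum>j\<le>k. yv k x j) = yv k x 0 + (\<Sum>j<k. yv k x (Suc j))"
    by (simp add: sum.atMost_shift)
  also have "(\<Sum>j<k. yv k x (Suc j)) = (\<Sum>c<k. x c)" by (simp add: yv_def)
  finally show ?thesis by (simp add: yv_def)
qed

lemma MM_ge: "j \<le> k \<Longrightarrow> - yv k x j \<le> MM k x"
  unfolding MM_def using mx_ge[of j k "\<lambda>j. - yv k x j"] by simp

lemma MM_nonneg: "0 \<le> MM k x"
proof -
  have "(\<Sum>j\<le>k. - yv k x j) \<le> (\<Sum>j\<le>k. MM k x)"
    by (rule sum_mono) (simp add: MM_ge)
  then show ?thesis using yv_sum[of k x] by (auto simp: sum_negf zero_le_mult_iff)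
qed

lemma MM_zero:
  assumes "MM k x = 0" "c < k" shows "x c = 0"
proof -
  have le: "\<And>j. j \<le> k \<Longrightarrow> 0 \<le> yv k x j" using MM_ge[of _ k x] assms(1)
    by force
  then have "\<forall>j\<in>{..k}. yv k x j = 0"
    using sum_nonneg_eq_0_iff[of "{..k}" "\<lambda>j. yv k x j"] yv_sum[of k x] by auto
  then have "yv k x (Suc c) = 0" using assms(2) by auto
  then show ?thesis by (simp add: yv_def)
qed

lemma hh_pos:
  assumes "\<exists>c<k+m. x c \<noteq> 0" shows "0 < hh k m x"
proof (rule ccontr)
  assume "\<not> 0 < hh k m x"
  moreover have "0 \<le> real (k+1) * MM k x" using MM_nonneg by simp
  moreover have "0 \<le> (\<Sum>i<m. \<bar>x (k+i)\<bar>)" by (simp add: sum_nonneg)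
  ultimately have a0: "real (k+1) * MM k x = 0" and b: "(\<Sum>i<m. \<bar>x (k+i)\<bar>) = 0"
    unfolding hh_def by linarith+
  then have a: "MM k x = 0" by simp
  from b have b': "\<And>i. i < m \<Longrightarrow> x (k+i) = 0" by (simp add: sum_nonneg_eq_0_iff)
  from assms obtain c where "c < k+m" "x c \<noteq> 0" by auto
  show False
  proof (cases "c < k")
    case True then show False using MM_zero[OF a] \<open>x c \<noteq> 0\<close> by auto
  next
    case False
    have "x (k + (c - k)) = 0" by (rule b') (use False \<open>c < k+m\<close> in linarith)
    then show False using False \<open>x c \<noteq> 0\<close> by simp
  qed
qed


definition WW :: "nat \<Rightarrow> nat \<Rightarrow> (nat + nat \<times> bool) set" where
  "WW k m = Inl ` {..k} \<union> Inr ` ({..<m} \<times> UNIV)"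

lemma finite_WW: "finite (WW k m)" unfolding WW_def by simp

lemma notin_WW: "v \<notin> WW k m \<longleftrightarrow> (\<exists>j. v = Inl j \<and> k < j) \<or> (\<exists>i b. v = Inr (i,b) \<and> m \<le> i)"
  unfolding WW_def by (cases v) auto

lemma sum_WW: "sum g (WW k m) = (\<Sum>j\<le>k. g (Inl j)) + (\<Sum>i<m. g (Inr (i,True)) + g (Inr (i,False)))"
proof -
  have "sum g (WW k m) = sum g (Inl ` {..k}) + sum g (Inr ` ({..<m} \<times> UNIV))"
    unfolding WW_def by (rule sum.union_disjoint) auto
  also have "sum g (Inl ` {..k}) = (\<Sum>j\<le>k. g (Inl j))" by (simp add: sum.reindex)
  also have "sum g (Inr ` ({..<m} \<times> UNIV)) = (\<Sum>p\<in>{..<m} \<times> UNIV. g (Inr p))" by (simp add: sum.reindex)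
  also have "\<dots> = (\<Sum>i<m. \<Sum>b\<in>UNIV. g (Inr (i,b)))" by (simp add: sum.cartesian_product)
  also have "\<dots> = (\<Sum>i<m. g (Inr (i,True)) + g (Inr (i,False)))" by (simp add: UNIV_bool add.commute)
  finally show ?thesis .
qed

definition good :: "nat \<Rightarrow> nat \<Rightarrow> (nat + nat \<times> bool \<Rightarrow> real) \<Rightarrow> bool" where
  "good k m f \<longleftrightarrow> (\<forall>v. 0 \<le> f v) \<and> (\<forall>v. v \<notin> WW k m \<longrightarrow> f v = 0) \<and> (\<exists>j\<le>k. f (Inl j) = 0)
     \<and> (\<forall>i. f (Inr (i,True)) = 0 \<or> f (Inr (i,False)) = 0) \<and> sum f (WW k m) = 1"

lemma RC_bip: "f \<in> RC (bipyramid (simplex_boundary k) m) \<longleftrightarrow> good k m f"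
proof
  assume f: "f \<in> RC (bipyramid (simplex_boundary k) m)"
  let ?S = "{v. f v \<noteq> 0}"
  have S: "?S \<in> bipyramid (simplex_boundary k) m" "sum f ?S = 1" "\<forall>v. 0 \<le> f v"
    using f unfolding RC_def by auto
  have out: "\<forall>v. v \<notin> WW k m \<longrightarrow> f v = 0"
    using S(1) unfolding bip_mem by (force simp: notin_WW)
  have "sum f ?S = sum f (WW k m)"
    by (rule sum.mono_neutral_left) (use out finite_WW in auto)
  then show "good k m f" unfolding good_def using S out unfolding bip_mem by auto
next
  assume g: "good k m f"
  let ?S = "{v. f v \<noteq> 0}"
  have out: "\<forall>v. v \<notin> WW k m \<longrightarrow> f v = 0" using g unfolding good_def by auto
  have sub: "?S \<subseteq> WW k m" using out by auto
  have fin: "finite ?S" using finite_subset[OF sub finite_WW] .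
  have sm: "sum f ?S = sum f (WW k m)"
    by (rule sum.mono_neutral_left) (use out finite_WW in auto)
  have o1: "\<And>j. k < j \<Longrightarrow> f (Inl j) = 0" using out by (auto simp: notin_WW)
  have o2: "\<And>i b. m \<le> i \<Longrightarrow> f (Inr (i,b)) = 0" using out by (auto simp: notin_WW)
  have g3: "\<forall>i. f (Inr (i,True)) = 0 \<or> f (Inr (i,False)) = 0" "\<exists>j\<le>k. f (Inl j) = 0"
    using g unfolding good_def by auto
  moreover have "?S \<in> bipyramid (simplex_boundary k) m"
    unfolding bip_mem
    apply (intro conjI allI impI)
    subgoal for j using o1[of j] by (cases "j \<le> k") auto
    subgoal using g3(2) by auto
    subgoal for i b using o2[of i b] by (cases "i < m") auto
    subgoal for i using g3(1) by auto
    done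
  ultimately have "?S \<in> bipyramid (simplex_boundary k) m" by blast
  moreover have "\<forall>v. 0 \<le> f v" "sum f (WW k m) = 1" using g unfolding good_def by auto
  ultimately show "f \<in> RC (bipyramid (simplex_boundary k) m)"
    unfolding RC_def
    apply (intro CollectI conjI)
       apply assumption
      apply (rule fin)
     apply assumption
    using sm by (rule trans)
qed

lemma yv_Phr:
  assumes "j \<le> k"
  shows "yv k (Phr k m f) j = f (Inl j) - sC k f / (k+1)"
proof (cases j)
  case 0
  have s: "sC k f = f (Inl 0) + (\<Sum>c<k. f (Inl (Suc c)))"
    unfolding sC_def by (simp add: sum.atMost_shift)
  have "yv k (Phr k m f) 0 = - (\<Sum>c<k. f (Inl (Suc c)) - sC k f / (k+1))"
    by (simp add: yv_def Phr_def)
  also have "\<dots> = - (\<Sum>c<k. f (Inl (Suc c))) + k * (sC k f / (k+1))"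
    by (simp add: sum_subtractf)
  also have "\<dots> = f (Inl 0) - sC k f / (k+1)"
    using s by (simp add: field_simps)
  finally show ?thesis using 0 by simp
next
  case (Suc c)
  then show ?thesis using assms by (simp add: yv_def Phr_def)
qed

lemma MM_Phr:
  assumes "good k m f"
  shows "MM k (Phr k m f) = sC k f / (k+1)"
proof -
  let ?t = "sC k f / (k+1)"
  have "MM k (Phr k m f) = mx (\<lambda>j. ?t - f (Inl j)) k"
    unfolding MM_def by (rule mx_cong) (simp add: yv_Phr)
  moreover obtain j where "j \<le> k" "mx (\<lambda>j. ?t - f (Inl j)) k = ?t - f (Inl j)"
    using mx_att by blast
  moreover obtain j' where "j' \<le> k" "f (Inl j') = 0" using assms unfolding good_def by auto
  moreover have "?t - f (Inl j') \<le> mx (\<lambda>j. ?t - f (Inl j)) k"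
    using mx_ge[OF \<open>j' \<le> k\<close>, of "\<lambda>j. ?t - f (Inl j)"] by simp
  moreover have "0 \<le> f (Inl j)" using assms unfolding good_def by auto
  ultimately show ?thesis by linarith
qed

lemma Phr_hi: "i < m \<Longrightarrow> Phr k m f (k+i) = f (Inr (i,True)) - f (Inr (i,False))"
  by (simp add: Phr_def)

lemma hh_Phr:
  assumes "good k m f"
  shows "hh k m (Phr k m f) = 1"
proof -
  have p: "\<And>i. \<bar>f (Inr (i,True)) - f (Inr (i,False))\<bar> = f (Inr (i,True)) + f (Inr (i,False))"
  proof -
    fix i
    have "f (Inr (i,True)) = 0 \<or> f (Inr (i,False)) = 0" "0 \<le> f (Inr (i,True))" "0 \<le> f (Inr (i,False))"
      using assms unfolding good_def by auto
    then show "\<bar>f (Inr (i,True)) - f (Inr (i,False))\<bar> = f (Inr (i,True)) + f (Inr (i,False))" by auto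
  qed
  have "hh k m (Phr k m f) = sC k f + (\<Sum>i<m. f (Inr (i,True)) + f (Inr (i,False)))"
    unfolding hh_def MM_Phr[OF assms] using p by (simp add: Phr_hi)
  also have "\<dots> = sum f (WW k m)" by (simp add: sum_WW sC_def)
  also have "\<dots> = 1" using assms unfolding good_def by auto
  finally show ?thesis .
qed

lemma Ps_Phr:
  assumes "good k m f"
  shows "Ps k m (Phr k m f) = f"
proof
  fix v
  have g: "\<forall>v. 0 \<le> f v" "\<forall>v. v \<notin> WW k m \<longrightarrow> f v = 0"
     "\<forall>i. f (Inr (i,True)) = 0 \<or> f (Inr (i,False)) = 0"
    using assms unfolding good_def by auto
  show "Ps k m (Phr k m f) v = f v"
  proof (cases v)
    case (Inl j)
    then show ?thesis using g(2) by (auto simp: Ps_def hh_Phr[OF assms] Psr_def MM_Phr[OF assms] yv_Phr notin_WW)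
  next
    case (Inr p)
    then obtain i b where p: "v = Inr (i,b)" by (cases p) auto
    show ?thesis
    proof (cases "i < m")
      case True
      then show ?thesis using g(1)[rule_format, of "Inr (i,True)"] g(1)[rule_format, of "Inr (i,False)"] g(3)[rule_format, of i]
        by (cases b) (auto simp: p Ps_def hh_Phr[OF assms] Psr_def Phr_hi max_def)
    next
      case False
      then show ?thesis using g(2) by (auto simp: p Ps_def hh_Phr[OF assms] Psr_def notin_WW)
    qed
  qed
qed

lemma yv_scale: "yv k (\<lambda>c. x c / r) j = yv k x j / r"
  by (simp add: yv_def sum_divide_distrib)

lemma MM_scale: "r > 0 \<Longrightarrow> MM k (\<lambda>c. x c / r) = MM k x / r"
  unfolding MM_def yv_scale using mx_scale[of r "\<lambda>j. - yv k x j" k] by simp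

lemma hh_scale: "r > 0 \<Longrightarrow> hh k m (\<lambda>c. x c / r) = hh k m x / r"
  unfolding hh_def MM_scale by (simp add: abs_divide sum_divide_distrib add_divide_distrib)

lemma max_div: "(r::real) > 0 \<Longrightarrow> max (a/r) 0 = max a 0 / r"
  by (cases "a \<le> 0") (auto simp: max_def divide_le_0_iff)

lemma max_div2: "(r::real) > 0 \<Longrightarrow> max (- (a/r)) 0 = max (- a) 0 / r"
  using max_div[of r "-a"] by simp

lemma Ps_scale:
  assumes "r > 0" shows "Ps k m (\<lambda>c. x c / r) = Ps k m x"
proof
  fix v
  have "Psr k m (\<lambda>c. x c / r) v = Psr k m x v / r"
    using assms by (cases v) (auto simp: Psr_def yv_scale MM_scale add_divide_distrib max_div max_div2)
  then show "Ps k m (\<lambda>c. x c / r) v = Ps k m x v"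
    using assms unfolding Ps_def hh_scale[OF assms] by (cases "hh k m x = 0") auto
qed

lemma hh_zero: "(\<And>c. c < k+m \<Longrightarrow> x c = 0) \<Longrightarrow> hh k m x = 0"
proof -
  assume z: "\<And>c. c < k+m \<Longrightarrow> x c = 0"
  have "MM k x = mx (\<lambda>j. 0) k" unfolding MM_def
    by (rule mx_cong) (auto simp: yv_def z)
  then show ?thesis unfolding hh_def mx_zero by (simp add: z)
qed


definition SP :: "nat \<Rightarrow> (nat \<Rightarrow> real) set" where
  "SP d = {x. (\<Sum>i\<le>d. x i ^ 2) = 1 \<and> (\<forall>i>d. x i = 0)}"

lemma nsphere_SP: "nsphere d = subtopology (powertop_real UNIV) (SP d)"
  unfolding nsphere SP_def ..

lemma atMost_km: "1 \<le> (k::nat) \<Longrightarrow> {..k - 1 + m} = {..<k+m}"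
  using lessThan_Suc_atMost[of "k - 1 + m"] by simp

lemma nrm_pos:
  assumes "good k m f" shows "0 < nrm (k+m) (Phr k m f)"
proof (rule ccontr)
  assume "\<not> 0 < nrm (k+m) (Phr k m f)"
  then have "(\<Sum>c<k+m. (Phr k m f c)^2) = 0"
    unfolding nrm_def using sum_nonneg[of "{..<k+m}" "\<lambda>c. (Phr k m f c)^2"] by simp
  then have "\<forall>c\<in>{..<k+m}. (Phr k m f c)^2 = 0"
    by (subst (asm) sum_nonneg_eq_0_iff) auto
  then have "hh k m (Phr k m f) = 0" by (intro hh_zero) auto
  then show False using hh_Phr[OF assms] by simp
qed

lemma Ph_in:
  assumes "good k m f" "1 \<le> k" shows "Ph k m f \<in> SP (k - 1 + m)"
proof -
  let ?S = "\<Sum>c<k+m. (Phr k m f c)^2"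
  have N: "0 < nrm (k+m) (Phr k m f)" by (rule nrm_pos[OF assms(1)])
  have S: "0 < ?S" using N unfolding nrm_def by simp
  have "(\<Sum>i\<le>k - 1 + m. (Ph k m f i)^2) = (\<Sum>c<k+m. (Phr k m f c)^2 / ?S)"
    unfolding atMost_km[OF assms(2)] Ph_def nrm_def using S
    by (intro sum.cong) (auto simp: power_divide)
  also have "\<dots> = 1" using S by (simp add: sum_divide_distrib[symmetric])
  finally have "(\<Sum>i\<le>k - 1 + m. (Ph k m f i)^2) = 1" .
  moreover have "\<forall>i>k - 1 + m. Ph k m f i = 0"
    using assms(2) by (auto simp: Ph_def Phr_def)
  ultimately show ?thesis unfolding SP_def by auto
qed

lemma SP_nz: assumes "x \<in> SP (k - 1 + m)" "1 \<le> k" shows "\<exists>c<k+m. x c \<noteq> 0"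
proof (rule ccontr)
  assume "\<not> (\<exists>c<k+m. x c \<noteq> 0)"
  then have "(\<Sum>i\<le>k - 1 + m. (x i)^2) = 0" unfolding atMost_km[OF assms(2)] by simp
  then show False using assms(1) unfolding SP_def by simp
qed

lemma Ps_good:
  assumes "x \<in> SP (k - 1 + m)" "1 \<le> k" shows "good k m (Ps k m x)"
proof -
  have h: "0 < hh k m x" by (rule hh_pos[OF SP_nz[OF assms]])
  have nn: "\<forall>v. 0 \<le> Ps k m x v"
  proof
    fix v show "0 \<le> Ps k m x v"
    proof (cases v)
      case (Inl j)
      then show ?thesis using h MM_ge[of j k x] by (auto simp: Ps_def Psr_def)
    next
      case (Inr p) then show ?thesis using h by (cases p) (auto simp: Ps_def Psr_def)
    qed
  qed
  have out: "\<forall>v. v \<notin> WW k m \<longrightarrow> Ps k m x v = 0"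
    by (auto simp: notin_WW Ps_def Psr_def)
  obtain j where j: "j \<le> k" "MM k x = - yv k x j" unfolding MM_def using mx_att by blast
  then have ex: "\<exists>j\<le>k. Ps k m x (Inl j) = 0" by (auto simp: Ps_def Psr_def)
  have pr: "\<forall>i. Ps k m x (Inr (i,True)) = 0 \<or> Ps k m x (Inr (i,False)) = 0"
    by (auto simp: Ps_def Psr_def max_def)
  have ab: "\<And>a::real. max a 0 + max (-a) 0 = \<bar>a\<bar>" by (auto simp: max_def)
  have "sum (Psr k m x) (WW k m) = (\<Sum>j\<le>k. yv k x j + MM k x) + (\<Sum>i<m. \<bar>x (k+i)\<bar>)"
    unfolding sum_WW by (simp add: Psr_def ab)
  also have "\<dots> = hh k m x" unfolding hh_def by (simp add: sum.distrib yv_sum)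
  finally have "sum (Ps k m x) (WW k m) = 1"
    using h unfolding Ps_def by (simp add: sum_divide_distrib[symmetric])
  then show ?thesis unfolding good_def using nn out ex pr by blast
qed

lemma Ph_Ps:
  assumes "x \<in> SP (k - 1 + m)" "1 \<le> k" shows "Ph k m (Ps k m x) = x"
proof -
  have h: "0 < hh k m x" by (rule hh_pos[OF SP_nz[OF assms]])
  have sc: "sC k (Ps k m x) = (k+1) * MM k x / hh k m x"
    unfolding sC_def Ps_def by (simp add: Psr_def sum_divide_distrib[symmetric] sum.distrib yv_sum)
  have sc': "sC k (Ps k m x) / (k+1) = MM k x / hh k m x"
    unfolding sc by simp
  have z: "\<And>c. k + m \<le> c \<Longrightarrow> x c = 0" using assms unfolding SP_def by auto
  have r: "Phr k m (Ps k m x) = (\<lambda>c. x c / hh k m x)"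
  proof
    fix c
    show "Phr k m (Ps k m x) c = x c / hh k m x"
    proof (cases "c < k")
      case True
      then show ?thesis unfolding Phr_def sc' using h
        by (simp add: Ps_def Psr_def yv_def diff_divide_distrib[symmetric])
    next
      case False
      show ?thesis
      proof (cases "c < k + m")
        case True
        then have "x (k + (c - k)) = x c" using False by simp
        then show ?thesis unfolding Phr_def using True False
          by (auto simp: Ps_def Psr_def max_def diff_divide_distrib[symmetric])
      next
        case F2: False
        then show ?thesis using False z[of c] by (simp add: Phr_def)
      qed
    qed
  qed
  have "(\<Sum>c<k+m. (x c / hh k m x)^2) = (\<Sum>c<k+m. (x c)^2) / (hh k m x)^2"
    by (simp add: power_divide sum_divide_distrib)
  also have "(\<Sum>c<k+m. (x c)^2) = 1" using assms unfolding SP_def atMost_km[OF assms(2)] by simp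
  finally have "nrm (k+m) (Phr k m (Ps k m x)) = 1 / hh k m x"
    unfolding nrm_def r using h by (simp add: real_sqrt_divide)
  then show ?thesis unfolding Ph_def r using h by auto
qed

lemma Phr_cont: "continuous_map (subtopology (powertop_real UNIV) S) euclideanreal (\<lambda>f. Phr k m f c)"
proof -
  consider "c < k" | "\<not> c < k" "c < k+m" | "\<not> c < k + m" by linarith
  then show ?thesis
    by cases (simp_all add: Phr_def sC_def; intro continuous_intros proj_cont)+
qed

lemma nrm_Phr_cont: "continuous_map (subtopology (powertop_real UNIV) S) euclideanreal (\<lambda>f. nrm d (Phr k m f))"
  unfolding nrm_def by (intro continuous_intros Phr_cont) auto

lemma yv_cont: "continuous_map (subtopology (powertop_real UNIV) S) euclideanreal (\<lambda>x. yv k x j)"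
  by (cases "j = 0") (simp_all add: yv_def; intro continuous_intros proj_cont)+

lemma MM_cont: "continuous_map (subtopology (powertop_real UNIV) S) euclideanreal (\<lambda>x. MM k x)"
  unfolding MM_def by (rule mx_cont) (intro continuous_intros yv_cont)

lemma hh_cont: "continuous_map (subtopology (powertop_real UNIV) S) euclideanreal (\<lambda>x. hh k m x)"
  unfolding hh_def by (intro continuous_intros MM_cont proj_cont) auto

lemma Psr_cont: "continuous_map (subtopology (powertop_real UNIV) S) euclideanreal (\<lambda>x. Psr k m x v)"
proof (cases v)
  case (Inl j)
  then show ?thesis by (cases "j \<le> k") (simp_all add: Psr_def; intro continuous_intros yv_cont MM_cont)+
next
  case (Inr p)
  then obtain i b where "v = Inr (i,b)" by (cases p) auto
  then show ?thesis
    by (cases "i < m"; cases b) (simp_all add: Psr_def; intro continuous_intros proj_cont)+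
qed

lemma bip_sphere:
  assumes "1 \<le> k"
  shows "realization (bipyramid (simplex_boundary k) m) homeomorphic_space nsphere (k - 1 + m)"
proof -
  let ?X = "realization (bipyramid (simplex_boundary k) m)"
  let ?Y = "nsphere (k - 1 + m)"
  have tX: "topspace ?X = {f. good k m f}" unfolding topspace_realization using RC_bip by auto
  have tY: "topspace ?Y = SP (k - 1 + m)" unfolding nsphere_SP by simp
  have c1: "continuous_map ?X ?Y (Ph k m)"
    unfolding nsphere_SP continuous_map_in_subtopology
  proof
    show "continuous_map ?X (powertop_real UNIV) (Ph k m)"
      unfolding continuous_map_componentwise_UNIV realization_RC Ph_def
    proof
      fix c
      show "continuous_map (subtopology (powertop_real UNIV) (RC (bipyramid (simplex_boundary k) m)))
          euclideanreal (\<lambda>x. Phr k m x c / nrm (k + m) (Phr k m x))"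
        by (intro continuous_map_real_divide Phr_cont nrm_Phr_cont)
           (use nrm_pos RC_bip in force)
    qed
    show "Ph k m \<in> topspace ?X \<rightarrow> SP (k - 1 + m)" using tX Ph_in assms by auto
  qed
  have c2: "continuous_map ?Y ?X (Ps k m)"
    unfolding realization_RC continuous_map_in_subtopology
  proof
    show "continuous_map ?Y (powertop_real UNIV) (Ps k m)"
      unfolding continuous_map_componentwise_UNIV nsphere_SP Ps_def
    proof
      fix v
      show "continuous_map (subtopology (powertop_real UNIV) (SP (k - 1 + m))) euclideanreal
          (\<lambda>x. Psr k m x v / hh k m x)"
        by (intro continuous_map_real_divide Psr_cont hh_cont)
           (use hh_pos SP_nz assms in force)
    qed
    show "Ps k m \<in> topspace ?Y \<rightarrow> RC (bipyramid (simplex_boundary k) m)"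
      using tY Ps_good RC_bip assms by auto
  qed
  have i1: "\<forall>f\<in>topspace ?X. Ps k m (Ph k m f) = f"
  proof
    fix f assume "f \<in> topspace ?X"
    then have g: "good k m f" using tX by auto
    have "Ph k m f = (\<lambda>c. Phr k m f c / nrm (k+m) (Phr k m f))" unfolding Ph_def ..
    then show "Ps k m (Ph k m f) = f" using Ps_scale[OF nrm_pos[OF g]] Ps_Phr[OF g] by simp
  qed
  have i2: "\<forall>x\<in>topspace ?Y. Ph k m (Ps k m x) = x" using tY Ph_Ps assms by auto
  show ?thesis unfolding homeomorphic_space_def homeomorphic_maps_def
    using c1 c2 i1 i2 by blast
qed


section \<open>Isomorphism invariance\<close>

lemma iso_Union: "inj_on f (\<Union>K) \<Longrightarrow> (\<lambda>\<sigma>. f ` \<sigma>) ` K = L \<Longrightarrow> \<Union>L = f ` (\<Union>K)"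
  by auto

lemma iso_card: "simp_iso K L \<Longrightarrow> card (\<Union>K) = card (\<Union>L)"
  unfolding simp_iso_def using iso_Union card_image by metis

lemma iso_sym: assumes "simp_iso K L" shows "simp_iso L K"
proof -
  obtain f where f: "inj_on f (\<Union>K)" "(\<lambda>\<sigma>. f ` \<sigma>) ` K = L" using assms unfolding simp_iso_def by blast
  let ?g = "inv_into (\<Union>K) f"
  have U: "\<Union>L = f ` (\<Union>K)" using iso_Union[OF f] .
  have "inj_on ?g (\<Union>L)" unfolding U by (rule inj_on_inv_into) simp
  moreover have "(\<lambda>\<tau>. ?g ` \<tau>) ` L = K"
  proof -
    have "\<And>\<sigma>. \<sigma> \<in> K \<Longrightarrow> ?g ` (f ` \<sigma>) = \<sigma>"
      by (rule inv_into_image_cancel[OF f(1)]) auto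
    then show ?thesis using f(2) by (auto simp: image_image)
  qed
  ultimately show ?thesis unfolding simp_iso_def by blast
qed

lemma iso_real:
  assumes "simp_iso K L"
  shows "realization K homeomorphic_space realization L"
proof -
  obtain f where f: "inj_on f (\<Union>K)" "(\<lambda>\<sigma>. f ` \<sigma>) ` K = L" using assms unfolding simp_iso_def by blast
  let ?U = "\<Union>K"
  let ?g = "inv_into ?U f"
  have U: "\<Union>L = f ` ?U" using iso_Union[OF f] .
  define A where "A = (\<lambda>\<phi> v. if v \<in> f ` ?U then \<phi> (?g v) else (0::real))"
  define B where "B = (\<lambda>\<psi> u. if u \<in> ?U then \<psi> (f u) else (0::real))"
  have gf: "\<And>u. u \<in> ?U \<Longrightarrow> ?g (f u) = u" using f(1) by simp
  have fg: "\<And>v. v \<in> f ` ?U \<Longrightarrow> f (?g v) = v" by (simp add: f_inv_into_f)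
  have A_in: "A \<phi> \<in> RC L" if "\<phi> \<in> RC K" for \<phi>
  proof -
    let ?S = "{u. \<phi> u \<noteq> 0}"
    have S: "?S \<in> K" "finite ?S" "sum \<phi> ?S = 1" "\<forall>u. 0 \<le> \<phi> u" using that unfolding RC_def by auto
    have SU: "?S \<subseteq> ?U" using S(1) by auto
    have supp: "{v. A \<phi> v \<noteq> 0} = f ` ?S"
    proof
      show "{v. A \<phi> v \<noteq> 0} \<subseteq> f ` ?S"
      proof
        fix v assume v: "v \<in> {v. A \<phi> v \<noteq> 0}"
        then have v1: "v \<in> f ` ?U" "\<phi> (?g v) \<noteq> 0" unfolding A_def by (auto split: if_splits)
        then have "v = f (?g v)" using fg by simp
        then show "v \<in> f ` ?S" using v1(2) by blast
      qed
      show "f ` ?S \<subseteq> {v. A \<phi> v \<noteq> 0}"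
      proof
        fix v assume "v \<in> f ` ?S"
        then obtain u where u: "u \<in> ?S" "v = f u" by blast
        then have "u \<in> ?U" using SU by blast
        then have "A \<phi> v = \<phi> u" unfolding A_def u(2) using gf by simp
        then show "v \<in> {v. A \<phi> v \<noteq> 0}" using u(1) by simp
      qed
    qed
    have "sum (A \<phi>) (f ` ?S) = sum (A \<phi> \<circ> f) ?S"
      by (rule sum.reindex) (rule inj_on_subset[OF f(1) SU])
    also have "\<dots> = sum \<phi> ?S"
    proof (rule sum.cong)
      fix u assume "u \<in> ?S"
      then have "u \<in> ?U" using SU by blast
      then show "(A \<phi> \<circ> f) u = \<phi> u" unfolding A_def using gf by simp
    qed simp
    finally have sm: "sum (A \<phi>) {v. A \<phi> v \<noteq> 0} = 1" unfolding supp using S(3) by simp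
    have nn: "\<forall>v. 0 \<le> A \<phi> v" unfolding A_def using S(4) by simp
    have inL: "{v. A \<phi> v \<noteq> 0} \<in> L" unfolding supp using S(1) f(2) by blast
    have fin: "finite {v. A \<phi> v \<noteq> 0}" unfolding supp using S(2) by simp
    show ?thesis unfolding RC_def using sm nn inL fin by blast
  qed
  have B_in: "B \<psi> \<in> RC K" if "\<psi> \<in> RC L" for \<psi>
  proof -
    let ?T = "{v. \<psi> v \<noteq> 0}"
    have T: "?T \<in> L" "finite ?T" "sum \<psi> ?T = 1" "\<forall>u. 0 \<le> \<psi> u" using that unfolding RC_def by auto
    then obtain \<sigma> where \<sigma>: "\<sigma> \<in> K" "?T = f ` \<sigma>" using f(2) by auto
    have sU: "\<sigma> \<subseteq> ?U" using \<sigma>(1) by auto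
    have supp: "{u. B \<psi> u \<noteq> 0} = \<sigma>"
    proof
      show "{u. B \<psi> u \<noteq> 0} \<subseteq> \<sigma>"
      proof
        fix u assume "u \<in> {u. B \<psi> u \<noteq> 0}"
        then have "u \<in> ?U" "f u \<in> f ` \<sigma>" using \<sigma>(2) by (auto simp: B_def split: if_splits)
        then show "u \<in> \<sigma>" using f(1) sU by (auto dest: inj_onD)
      qed
      show "\<sigma> \<subseteq> {u. B \<psi> u \<noteq> 0}" using sU \<sigma>(2) by (auto simp: B_def)
    qed
    have "sum \<psi> (f ` \<sigma>) = sum (\<psi> \<circ> f) \<sigma>"
      by (rule sum.reindex) (use inj_on_subset[OF f(1) sU] in auto)
    also have "\<dots> = sum (B \<psi>) \<sigma>"
    proof (rule sum.cong)
      fix u assume "u \<in> \<sigma>"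
      then have "u \<in> ?U" using sU by blast
      then show "(\<psi> \<circ> f) u = B \<psi> u" unfolding B_def by simp
    qed simp
    finally have sm: "sum (B \<psi>) {u. B \<psi> u \<noteq> 0} = 1" unfolding supp using T(3) \<sigma>(2) by simp
    have nn: "\<forall>v. 0 \<le> B \<psi> v" unfolding B_def using T(4) by simp
    have fin: "finite {u. B \<psi> u \<noteq> 0}" unfolding supp
      using T(2) \<sigma>(2) finite_image_iff[OF inj_on_subset[OF f(1) sU]] by simp
    show ?thesis unfolding RC_def using sm nn fin supp \<sigma>(1) by simp
  qed
  have BA: "B (A \<phi>) = \<phi>" if "\<phi> \<in> RC K" for \<phi>
  proof
    fix u
    have "{u. \<phi> u \<noteq> 0} \<in> K" using that unfolding RC_def by auto
    then have "u \<notin> ?U \<Longrightarrow> \<phi> u = 0" by auto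
    then show "B (A \<phi>) u = \<phi> u" using gf by (auto simp: A_def B_def)
  qed
  have AB: "A (B \<psi>) = \<psi>" if "\<psi> \<in> RC L" for \<psi>
  proof
    fix v
    have "{v. \<psi> v \<noteq> 0} \<in> L" using that unfolding RC_def by auto
    then have "v \<notin> f ` ?U \<Longrightarrow> \<psi> v = 0" using U by auto
    moreover have "v \<in> f ` ?U \<Longrightarrow> ?g v \<in> ?U" by (rule inv_into_into)
    ultimately show "A (B \<psi>) v = \<psi> v" using fg by (auto simp: A_def B_def)
  qed
  have cA: "continuous_map (realization K) (realization L) A"
    unfolding realization_RC continuous_map_in_subtopology continuous_map_componentwise_UNIV
  proof (intro conjI allI)
    fix v
    show "continuous_map (subtopology (powertop_real UNIV) (RC K)) euclideanreal (\<lambda>x. A x v)"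
      by (cases "v \<in> f ` ?U") (simp_all add: A_def proj_cont)
    show "A \<in> topspace (subtopology (powertop_real UNIV) (RC K)) \<rightarrow> RC L" using A_in by auto
  qed
  have cB: "continuous_map (realization L) (realization K) B"
    unfolding realization_RC continuous_map_in_subtopology continuous_map_componentwise_UNIV
  proof (intro conjI allI)
    fix u
    show "continuous_map (subtopology (powertop_real UNIV) (RC L)) euclideanreal (\<lambda>x. B x u)"
      by (cases "u \<in> ?U") (simp_all add: B_def proj_cont)
    show "B \<in> topspace (subtopology (powertop_real UNIV) (RC L)) \<rightarrow> RC K" using B_in by auto
  qed
  show ?thesis unfolding homeomorphic_space_def homeomorphic_maps_def
    using cA cB BA AB unfolding topspace_realization by blast
qed


definition FOR :: "nat set \<Rightarrow> nat set \<Rightarrow> (nat \<Rightarrow> nat) set" where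
  "FOR A B = {p. (\<forall>y\<in>B. p y \<in> A \<union> B) \<and> (\<forall>y. y \<notin> B \<longrightarrow> p y = 0) \<and> (\<forall>y\<in>B. \<exists>j. (p^^j) y \<in> A)}"

definition Fc :: "nat \<Rightarrow> nat \<Rightarrow> nat" where
  "Fc a b = (if b = 0 then 1 else a * (a+b)^(b-1))"

definition Pt :: "nat set \<Rightarrow> nat set \<Rightarrow> nat set \<Rightarrow> (nat \<Rightarrow> nat) set" where
  "Pt A B S = {p \<in> FOR A B. {y\<in>B. p y \<in> A} = S}"

lemma finite_FOR: "finite A \<Longrightarrow> finite B \<Longrightarrow> finite (FOR A B)"
  by (rule finite_subset[OF _ finite_set_of_finite_funs[of B "A \<union> B" 0]]) (auto simp: FOR_def)

lemma FOR_empty: "FOR A {} = {\<lambda>_. 0}"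
  by (auto simp: FOR_def)

lemma FOR_empty2: "B \<noteq> {} \<Longrightarrow> FOR {} B = {}"
  by (auto simp: FOR_def)

lemma reach1:
  assumes p: "p \<in> FOR A B" and AB: "A \<inter> B = {}"
  and S: "S = {y\<in>B. p y \<in> A}" and r: "r = (\<lambda>y. if y \<in> B - S then p y else 0)"
  shows "y \<in> B - S \<Longrightarrow> (p^^j) y \<in> A \<Longrightarrow> \<exists>i. (r^^i) y \<in> S"
proof (induction j arbitrary: y)
  case 0 then show ?case using AB by auto
next
  case (Suc j)
  have py: "p y \<in> A \<union> B" using p Suc.prems(1) unfolding FOR_def by auto
  have "p y \<notin> A" using Suc.prems(1) S by auto
  then have pyB: "p y \<in> B" using py by auto
  have ry: "r y = p y" using Suc.prems(1) r by auto
  show ?case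
  proof (cases "p y \<in> S")
    case True
    then have "(r^^1) y \<in> S" using ry by simp
    then show ?thesis by blast
  next
    case False
    have "(p^^j) (p y) \<in> A" using Suc.prems(2) by (simp add: funpow_Suc_right del: funpow.simps)
    then obtain i where "(r^^i) (p y) \<in> S" using Suc.IH[of "p y"] pyB False by auto
    then have "(r^^(Suc i)) y \<in> S" using ry by (simp add: funpow_Suc_right del: funpow.simps)
    then show ?thesis by blast
  qed
qed

lemma reach2:
  assumes q: "q \<in> S \<rightarrow> A" and r: "r \<in> FOR S (B - S)" and SB: "S \<subseteq> B"
  and p: "p = (\<lambda>y. if y \<in> S then q y else r y)"
  shows "z \<in> B - S \<Longrightarrow> (r^^i) z \<in> S \<Longrightarrow> \<exists>j. (p^^j) z \<in> A"
proof (induction i arbitrary: z)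
  case 0 then show ?case by auto
next
  case (Suc i)
  have pz: "p z = r z" using Suc.prems(1) p by auto
  have rz: "r z \<in> S \<union> (B - S)" using r Suc.prems(1) unfolding FOR_def by auto
  show ?case
  proof (cases "r z \<in> S")
    case True
    then have "(p^^2) z \<in> A" using pz p q by (auto simp: numeral_2_eq_2)
    then show ?thesis by blast
  next
    case False
    then have "r z \<in> B - S" using rz by auto
    moreover have "(r^^i) (r z) \<in> S" using Suc.prems(2) by (simp add: funpow_Suc_right del: funpow.simps)
    ultimately obtain j where "(p^^j) (r z) \<in> A" using Suc.IH by blast
    then have "(p^^(Suc j)) z \<in> A" using pz by (simp add: funpow_Suc_right del: funpow.simps)
    then show ?thesis by blast
  qed
qed

lemma Pt_bij:
  assumes AB: "A \<inter> B = {}" and SB: "S \<subseteq> B"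
  shows "bij_betw (\<lambda>p. (restrict p S, \<lambda>y. if y \<in> B - S then p y else 0)) (Pt A B S)
           ((\<Pi>\<^sub>E y\<in>S. A) \<times> FOR S (B - S))"
proof (rule bij_betw_byWitness[where f' = "\<lambda>(q,r) y. if y \<in> S then q y else r y"])
  show "\<forall>p\<in>Pt A B S. (\<lambda>(q,r) y. if y \<in> S then q y else r y)
          (restrict p S, \<lambda>y. if y \<in> B - S then p y else 0) = p"
  proof
    fix p assume "p \<in> Pt A B S"
    then have "\<forall>y. y \<notin> B \<longrightarrow> p y = 0" unfolding Pt_def FOR_def by auto
    then show "(\<lambda>(q,r) y. if y \<in> S then q y else r y) (restrict p S, \<lambda>y. if y \<in> B - S then p y else 0) = p"
      using SB by (auto simp: fun_eq_iff)
  qed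
  show "\<forall>a'\<in>(\<Pi>\<^sub>E y\<in>S. A) \<times> FOR S (B - S).
          (\<lambda>p. (restrict p S, \<lambda>y. if y \<in> B - S then p y else 0)) ((\<lambda>(q,r) y. if y \<in> S then q y else r y) a') = a'"
  proof
    fix a' assume a': "a' \<in> (\<Pi>\<^sub>E y\<in>S. A) \<times> FOR S (B - S)"
    obtain q r where qr: "a' = (q,r)" by (cases a')
    have q: "q \<in> (\<Pi>\<^sub>E y\<in>S. A)" and r: "r \<in> FOR S (B - S)" using a' qr by auto
    have c1: "restrict (\<lambda>y. if y \<in> S then q y else r y) S = q"
      using q by (auto simp: restrict_def fun_eq_iff PiE_def extensional_def)
    have c2: "(\<lambda>y. if y \<in> B - S then (if y \<in> S then q y else r y) else 0) = r"
      using r unfolding FOR_def by (auto simp: fun_eq_iff)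
    have e: "(\<lambda>(q,r) y. if y \<in> S then q y else r y) a' = (\<lambda>y. if y \<in> S then q y else r y)"
      unfolding qr by simp
    show "(\<lambda>p. (restrict p S, \<lambda>y. if y \<in> B - S then p y else 0)) ((\<lambda>(q,r) y. if y \<in> S then q y else r y) a') = a'"
      unfolding e by (simp only: c1 c2 qr)
  qed
  show "(\<lambda>p. (restrict p S, \<lambda>y. if y \<in> B - S then p y else 0)) ` Pt A B S \<subseteq> (\<Pi>\<^sub>E y\<in>S. A) \<times> FOR S (B - S)"
  proof
    fix x assume "x \<in> (\<lambda>p. (restrict p S, \<lambda>y. if y \<in> B - S then p y else 0)) ` Pt A B S"
    then obtain p where p: "p \<in> Pt A B S" and x: "x = (restrict p S, \<lambda>y. if y \<in> B - S then p y else 0)" by blast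
    have pF: "p \<in> FOR A B" and S: "S = {y\<in>B. p y \<in> A}" using p unfolding Pt_def by auto
    let ?r = "\<lambda>y. if y \<in> B - S then p y else 0"
    have "restrict p S \<in> (\<Pi>\<^sub>E y\<in>S. A)" using S by auto
    moreover have "?r \<in> FOR S (B - S)"
      unfolding FOR_def
    proof (intro CollectI conjI ballI allI impI)
      fix y assume y: "y \<in> B - S"
      then have "p y \<in> A \<union> B" "p y \<notin> A" using pF S unfolding FOR_def by auto
      then show "?r y \<in> S \<union> (B - S)" using y by auto
      obtain j where "(p^^j) y \<in> A" using pF y unfolding FOR_def by auto
      then show "\<exists>j. (?r^^j) y \<in> S" using reach1[OF pF AB S refl] y by blast
    qed auto
    ultimately show "x \<in> (\<Pi>\<^sub>E y\<in>S. A) \<times> FOR S (B - S)" using x by simp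
  qed
  show "(\<lambda>(q,r) y. if y \<in> S then q y else r y) ` ((\<Pi>\<^sub>E y\<in>S. A) \<times> FOR S (B - S)) \<subseteq> Pt A B S"
  proof
    fix x assume "x \<in> (\<lambda>(q,r) y. if y \<in> S then q y else r y) ` ((\<Pi>\<^sub>E y\<in>S. A) \<times> FOR S (B - S))"
    then obtain a' where a': "a' \<in> (\<Pi>\<^sub>E y\<in>S. A) \<times> FOR S (B - S)"
      and xa: "x = (\<lambda>(q,r) y. if y \<in> S then q y else r y) a'" by (rule imageE)
    obtain q r where qr: "a' = (q,r)" by (cases a')
    have x: "x = (\<lambda>y. if y \<in> S then q y else r y)" using xa unfolding qr by simp
    have q: "q \<in> (\<Pi>\<^sub>E y\<in>S. A)" and r: "r \<in> FOR S (B - S)" using a' unfolding qr by auto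
    have q': "q \<in> S \<rightarrow> A" using q by auto
    have rv: "\<forall>y\<in>B - S. r y \<in> S \<union> (B - S)" "\<forall>y. y \<notin> B - S \<longrightarrow> r y = 0"
       "\<forall>y\<in>B - S. \<exists>j. (r^^j) y \<in> S" using r unfolding FOR_def by auto
    have xF: "x \<in> FOR A B"
      unfolding FOR_def
    proof (intro CollectI conjI ballI allI impI)
      fix y assume y: "y \<in> B"
      show "x y \<in> A \<union> B" using y q' rv(1) x SB by auto
      show "\<exists>j. (x^^j) y \<in> A"
      proof (cases "y \<in> S")
        case True
        then have "(x^^1) y \<in> A" using x q' by auto
        then show ?thesis by blast
      next
        case False
        then obtain i where "(r^^i) y \<in> S" using rv(3) y by auto
        then show ?thesis using reach2[OF q' r SB x, of y i] y False by auto
      qed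
    next
      fix y assume "y \<notin> B" then show "x y = 0" using x rv(2) SB by auto
    qed
    have "{y\<in>B. x y \<in> A} = S"
    proof -
      have "\<And>y. y \<in> B - S \<Longrightarrow> x y \<notin> A" using rv(1) x AB SB by auto
      moreover have "\<And>y. y \<in> S \<Longrightarrow> x y \<in> A" using x q' by auto
      ultimately show ?thesis using SB by blast
    qed
    then show "x \<in> Pt A B S" using xF unfolding Pt_def by auto
  qed
qed

lemma card_Pt:
  assumes "A \<inter> B = {}" "S \<subseteq> B" "finite A" "finite B"
  shows "card (Pt A B S) = card A ^ card S * card (FOR S (B - S))"
proof -
  have fS: "finite S" using assms(2,4) finite_subset by blast
  have "card (Pt A B S) = card ((\<Pi>\<^sub>E y\<in>S. A) \<times> FOR S (B - S))"
    using bij_betw_same_card[OF Pt_bij[OF assms(1,2)]] .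
  also have "\<dots> = card A ^ card S * card (FOR S (B - S))"
    using fS by (simp add: card_cartesian_product card_PiE)
  finally show ?thesis .
qed

lemma FOR_Union: "S1 \<noteq> S2 \<Longrightarrow> Pt A B S1 \<inter> Pt A B S2 = {}"
  unfolding Pt_def by auto

lemma FOR_eq_Union: "FOR A B = (\<Union>S\<in>Pow B. Pt A B S)"
  unfolding Pt_def by auto

lemma sum_Pow_card:
  assumes "finite B"
  shows "(\<Sum>S\<in>Pow B. g (card S)) = (\<Sum>s\<le>card B. (card B choose s) * (g s :: nat))"
proof -
  have "(\<Sum>S\<in>Pow B. g (card S)) = (\<Sum>s\<le>card B. \<Sum>S\<in>{S \<in> Pow B. card S = s}. g (card S))"
    by (rule sum.group[symmetric]) (use assms card_mono in auto)
  also have "\<dots> = (\<Sum>s\<le>card B. (card B choose s) * g s)"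
  proof (rule sum.cong)
    fix s
    have "(\<Sum>S\<in>{S \<in> Pow B. card S = s}. g (card S)) = (\<Sum>S\<in>{S \<in> Pow B. card S = s}. g s)"
      by (rule sum.cong) auto
    also have "\<dots> = card {S. S \<subseteq> B \<and> card S = s} * g s" by simp
    also have "\<dots> = (card B choose s) * g s" using n_subsets[OF assms] by simp
    finally show "(\<Sum>S\<in>{S \<in> Pow B. card S = s}. g (card S)) = (card B choose s) * g s" .
  qed simp
  finally show ?thesis .
qed

lemma Fc_identity:
  assumes "b \<ge> 1"
  shows "(\<Sum>s\<le>b. (b choose s) * (a^s * Fc s (b - s))) = Fc a b"
proof -
  obtain b' where b: "b = Suc b'" using assms by (cases b) auto
  have t: "(b choose Suc s) * (a^Suc s * Fc (Suc s) (b - Suc s)) = a * ((b' choose s) * a^s * b^(b'-s))"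
    if "s \<le> b'" for s
  proof (cases "s = b'")
    case True then show ?thesis using b by (simp add: Fc_def)
  next
    case False
    then have lt: "s < b'" using that by simp
    have f: "Fc (Suc s) (b - Suc s) = Suc s * b^(b' - s - 1)"
      using lt b by (simp add: Fc_def)
    have c: "(b choose Suc s) * Suc s = b * (b' choose s)"
      using Suc_times_binomial[of s b'] b by (simp add: mult.commute)
    have p: "b * b^(b' - s - 1) = b^(b' - s)"
      using lt by (metis Suc_diff_Suc diff_Suc_1 power_Suc)
    have "(b choose Suc s) * (a^Suc s * Fc (Suc s) (b - Suc s))
         = ((b choose Suc s) * Suc s) * a * a^s * b^(b' - s - 1)"
      unfolding f by (simp add: algebra_simps)
    also have "\<dots> = a * ((b' choose s) * a^s * (b * b^(b' - s - 1)))"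
      unfolding c by (simp add: algebra_simps)
    finally show ?thesis unfolding p .
  qed
  have "(\<Sum>s\<le>b. (b choose s) * (a^s * Fc s (b - s)))
      = (b choose 0) * (a^0 * Fc 0 b) + (\<Sum>s\<le>b'. (b choose Suc s) * (a^Suc s * Fc (Suc s) (b - Suc s)))"
    unfolding b by (simp only: sum.atMost_Suc_shift diff_zero)
  also have "(b choose 0) * (a^0 * Fc 0 b) = 0" using b by (simp add: Fc_def)
  also have "(\<Sum>s\<le>b'. (b choose Suc s) * (a^Suc s * Fc (Suc s) (b - Suc s)))
      = a * (\<Sum>s\<le>b'. (b' choose s) * a^s * b^(b'-s))"
    unfolding sum_distrib_left by (rule sum.cong[OF refl]) (rule t, simp)
  also have "(\<Sum>s\<le>b'. (b' choose s) * a^s * b^(b'-s)) = (a + b)^b'"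
    by (subst binomial) simp
  also have "0 + a * (a + b)^b' = Fc a b" using b by (simp only: Fc_def) simp
  finally show ?thesis .
qed

lemma card_FOR:
  "finite A \<Longrightarrow> finite B \<Longrightarrow> A \<inter> B = {} \<Longrightarrow> card (FOR A B) = Fc (card A) (card B)"
proof (induction "card B" arbitrary: A B rule: less_induct)
  case less
  show ?case
  proof (cases "B = {}")
    case True then show ?thesis by (simp add: FOR_empty Fc_def)
  next
    case False
    have Bpos: "card B \<ge> 1" using False less.prems(2) by (simp add: Suc_le_eq card_gt_0_iff)
    have PtS: "card (Pt A B S) = card A ^ card S * Fc (card S) (card B - card S)" if "S \<in> Pow B" for S
    proof -
      have SB: "S \<subseteq> B" using that by auto
      have fS: "finite S" using SB less.prems(2) finite_subset by blast
      have "card (FOR S (B - S)) = Fc (card S) (card B - card S)"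
      proof (cases "S = {}")
        case True
        then show ?thesis using False Bpos by (simp add: FOR_empty2 Fc_def)
      next
        case False
        have "0 < card S" using False fS by (simp add: card_gt_0_iff)
        moreover have "card S \<le> card B" by (rule card_mono[OF less.prems(2) SB])
        ultimately have "card (B - S) < card B" by (simp add: card_Diff_subset[OF fS SB])
        have "card (FOR S (B - S)) = Fc (card S) (card (B - S))"
          apply (rule less.hyps)
          using \<open>card (B - S) < card B\<close> fS less.prems(2) by auto
        then show ?thesis by (simp only: card_Diff_subset[OF fS SB])
      qed
      then show ?thesis using card_Pt[OF less.prems(3) SB less.prems(1,2)] by simp
    qed
    have "card (FOR A B) = (\<Sum>S\<in>Pow B. card (Pt A B S))"
      unfolding FOR_eq_Union
    proof (rule card_UN_disjoint)
      show "finite (Pow B)" using less.prems(2) by simp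
      have "finite (FOR A B)" using finite_FOR less.prems(1,2) by blast
      then show "\<forall>S\<in>Pow B. finite (Pt A B S)" unfolding Pt_def by auto
      show "\<forall>S1\<in>Pow B. \<forall>S2\<in>Pow B. S1 \<noteq> S2 \<longrightarrow> Pt A B S1 \<inter> Pt A B S2 = {}"
        using FOR_Union by blast
    qed
    also have "\<dots> = (\<Sum>S\<in>Pow B. card A ^ card S * Fc (card S) (card B - card S))"
      by (rule sum.cong[OF refl]) (rule PtS)
    also have "\<dots> = (\<Sum>s\<le>card B. (card B choose s) * (card A ^ s * Fc s (card B - s)))"
      by (rule sum_Pow_card[OF less.prems(2), where g = "\<lambda>s. card A ^ s * Fc s (card B - s)"])
    also have "\<dots> = Fc (card A) (card B)" by (rule Fc_identity[OF Bpos])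
    finally show ?thesis .
  qed
qed


definition Bs :: "nat \<Rightarrow> nat list \<Rightarrow> nat set" where
  "Bs n xs = {1..n-1} - set xs"

definition cyc :: "nat \<Rightarrow> nat list \<Rightarrow> (nat \<times> nat) set" where
  "cyc n xs = set (zip (n#xs) (xs@[n]))"

definition Vset :: "nat \<Rightarrow> nat list \<Rightarrow> (nat \<Rightarrow> nat) \<Rightarrow> (nat \<times> nat) set" where
  "Vset n xs p = cyc n xs \<union> (\<lambda>y. (p y, y)) ` Bs n xs \<union> (\<lambda>y. (n, y)) ` Bs n xs"

definition Kof :: "nat \<Rightarrow> nat list \<Rightarrow> (nat \<Rightarrow> nat) \<Rightarrow> (nat \<times> nat) set set" where
  "Kof n xs p = {\<sigma>. \<sigma> \<subseteq> Vset n xs p \<and> directed_forest \<sigma>}"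

definition Par :: "nat \<Rightarrow> nat \<Rightarrow> (nat list \<times> (nat \<Rightarrow> nat)) set" where
  "Par n k = {(xs,p). length xs = k \<and> distinct xs \<and> set xs \<subseteq> {1..n-1} \<and> p \<in> FOR (set xs) (Bs n xs)}"

lemma acyclic_rank:
  assumes "\<forall>(a,b)\<in>R. (r a :: nat) < r b" shows "acyclic R"
proof -
  have "(a,b) \<in> R^+ \<Longrightarrow> r a < r b" for a b
    by (induction rule: trancl_induct) (use assms in auto)
  then show ?thesis unfolding acyclic_def by auto
qed

lemma zip_trancl: "(a, n) \<in> (set (zip (a#xs) (xs@[n])))^+"
proof (induction xs arbitrary: a)
  case Nil then show ?case by auto
next
  case (Cons x xs)
  have "(x, n) \<in> (set (zip (a#x#xs) ((x#xs)@[n])))^+"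
    by (rule trancl_mono[OF Cons.IH]) auto
  moreover have "(a, x) \<in> set (zip (a#x#xs) ((x#xs)@[n]))" by simp
  ultimately show ?case by (meson trancl_into_trancl2)
qed

lemma forest_sub: "directed_forest E \<Longrightarrow> F \<subseteq> E \<Longrightarrow> directed_forest F"
  unfolding directed_forest_def using acyclic_subset by blast

lemma forest_single: "a \<noteq> b \<Longrightarrow> directed_forest {(a,b)}"
  unfolding directed_forest_def by (auto simp: acyclic_def trancl_insert)

lemma dep_lt:
  assumes p: "p \<in> FOR A B" and AB: "A \<inter> B = {}" and y: "y \<in> B"
  shows "(LEAST j. (p^^j) (p y) \<in> A) < (LEAST j. (p^^j) y \<in> A)"
proof -
  obtain j where j: "(p^^j) y \<in> A" using p y unfolding FOR_def by auto
  let ?d = "LEAST j. (p^^j) y \<in> A"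
  have d: "(p^^?d) y \<in> A" using j by (rule LeastI)
  have "?d \<noteq> 0" using d y AB by (intro notI) auto
  then obtain d' where d': "?d = Suc d'" by (cases ?d) auto
  have "(p^^d') (p y) \<in> A" using d unfolding d' by (simp add: funpow_Suc_right del: funpow.simps)
  then have "(LEAST j. (p^^j) (p y) \<in> A) \<le> d'" by (rule Least_le)
  then show ?thesis using d' by simp
qed

lemma FOR_noself:
  assumes p: "p \<in> FOR A B" and AB: "A \<inter> B = {}" and y: "y \<in> B"
  shows "p y \<noteq> y"
proof
  assume py: "p y = y"
  have "(p^^j) y = y" for j by (induction j) (use py in auto)
  moreover obtain j where "(p^^j) y \<in> A" using p y unfolding FOR_def by auto
  ultimately show False using y AB by auto
qed

locale par =
  fixes n :: nat and xs :: "nat list" and p :: "nat \<Rightarrow> nat"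
  assumes n2: "2 \<le> n" and dist: "distinct xs" and sub: "set xs \<subseteq> {1..n-1}"
    and ne: "xs \<noteq> []" and pF: "p \<in> FOR (set xs) (Bs n xs)"
begin

abbreviation "k \<equiv> length xs"
abbreviation "L \<equiv> n # xs"
abbreviation "M \<equiv> xs @ [n]"
abbreviation "B \<equiv> Bs n xs"
abbreviation "V \<equiv> Vset n xs p"

lemma n_notin: "n \<notin> set xs" using sub n2 by auto

lemma distL: "distinct L" using dist n_notin by simp
lemma distM: "distinct M" using dist n_notin by simp

lemma k_pos: "1 \<le> k" using ne by (cases xs) auto

lemma B_disj: "set L \<inter> B = {}" unfolding Bs_def using n2 by auto
lemma AB: "set xs \<inter> B = {}" unfolding Bs_def by auto
lemma finB: "finite B" unfolding Bs_def by simp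

lemma pB: "y \<in> B \<Longrightarrow> p y \<in> set xs \<union> B" using pF unfolding FOR_def by auto
lemma p_ne_n: "y \<in> B \<Longrightarrow> p y \<noteq> n" using pB n_notin B_disj by auto
lemma p_ne_y: "y \<in> B \<Longrightarrow> p y \<noteq> y" using FOR_noself[OF pF AB] by blast

lemma M_nth: "i \<le> k \<Longrightarrow> M ! i = L ! (if i < k then Suc i else 0)"
  by (auto simp: nth_append)

lemma cyc_nth: "cyc n xs = {(L!i, M!i) | i. i \<le> k}"
  unfolding cyc_def set_zip by (auto simp: less_Suc_eq_le)

lemma cyc_img: "cyc n xs = (\<lambda>i. (L!i, M!i)) ` {..k}"
  unfolding cyc_nth by auto

lemma cyc_snd: "(a,b) \<in> cyc n xs \<Longrightarrow> b \<in> set L"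
  unfolding cyc_def using set_zip_rightD by fastforce

lemma cyc_fst: "(a,b) \<in> cyc n xs \<Longrightarrow> a \<in> set L"
  unfolding cyc_def using set_zip_leftD by fastforce

lemma cyc_uniq: "(a,b) \<in> cyc n xs \<Longrightarrow> (a',b) \<in> cyc n xs \<Longrightarrow> a = a'"
proof -
  assume "(a,b) \<in> cyc n xs" "(a',b) \<in> cyc n xs"
  then obtain i i' where "i \<le> k" "i' \<le> k" "a = L!i" "b = M!i" "a' = L!i'" "b = M!i'"
    unfolding cyc_nth by auto
  moreover have "i = i'" using distM calculation by (simp add: nth_eq_iff_index_eq)
  ultimately show "a = a'" by simp
qed

lemma cyc_ne: "(a,b) \<in> cyc n xs \<Longrightarrow> a \<noteq> b"
proof -
  assume "(a,b) \<in> cyc n xs"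
  then obtain i where i: "i \<le> k" "a = L!i" "b = M!i" unfolding cyc_nth by auto
  have "b = L ! (if i < k then Suc i else 0)" using M_nth[OF i(1)] i by simp
  moreover have "i \<noteq> (if i < k then Suc i else 0)" using k_pos i(1) by auto
  ultimately show "a \<noteq> b" using distL i by (simp add: nth_eq_iff_index_eq)
qed

lemma setL_sub: "set L \<subseteq> {1..n}"
proof -
  have "\<forall>x\<in>set xs. 1 \<le> x \<and> x \<le> n - 1" using sub by auto
  then show ?thesis using n2 by auto
qed

lemma V_complete: "V \<subseteq> complete_digraph_edges n"
proof
  fix e assume e: "e \<in> V"
  obtain a b where ab: "e = (a,b)" by (cases e)
  show "e \<in> complete_digraph_edges n"
  proof (cases "e \<in> cyc n xs")
    case True
    then show ?thesis using cyc_fst cyc_snd cyc_ne setL_sub ab unfolding complete_digraph_edges_def by fastforce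
  next
    case False
    then obtain y where y: "y \<in> B" "e = (p y, y) \<or> e = (n, y)" using e unfolding Vset_def by auto
    have "y \<in> {1..n-1}" using y(1) unfolding Bs_def by auto
    moreover have "p y \<in> {1..n-1}" using pB[OF y(1)] sub unfolding Bs_def by auto
    ultimately show ?thesis using y p_ne_y unfolding complete_digraph_edges_def by auto
  qed
qed

lemma V_ne: "(a,b) \<in> V \<Longrightarrow> a \<noteq> b"
  using V_complete unfolding complete_digraph_edges_def by auto

lemma finV: "finite V" unfolding Vset_def cyc_def using finB by simp

lemma edges_into_L: "(a,b) \<in> V \<Longrightarrow> b \<in> set L \<Longrightarrow> (a,b) \<in> cyc n xs"
  using B_disj unfolding Vset_def by auto

lemma edges_into_B: "(a,b) \<in> V \<Longrightarrow> b \<in> B \<Longrightarrow> a = p b \<or> a = n"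
  using B_disj cyc_snd unfolding Vset_def by fastforce

definition dep :: "nat \<Rightarrow> nat" where "dep y = (LEAST j. (p^^j) y \<in> set xs)"

definition idx :: "nat \<Rightarrow> nat" where "idx x = (THE i. i \<le> k \<and> L!i = x)"

lemma idx_nth: "i \<le> k \<Longrightarrow> idx (L!i) = i"
  unfolding idx_def using distL by (intro the_equality) (auto simp: nth_eq_iff_index_eq)

lemma forest_iff:
  assumes sV: "\<sigma> \<subseteq> V"
  shows "directed_forest \<sigma> \<longleftrightarrow> \<not> cyc n xs \<subseteq> \<sigma> \<and> (\<forall>y\<in>B. \<not> ((p y, y) \<in> \<sigma> \<and> (n, y) \<in> \<sigma>))"
proof
  assume f: "directed_forest \<sigma>"
  have "\<not> cyc n xs \<subseteq> \<sigma>"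
  proof
    assume "cyc n xs \<subseteq> \<sigma>"
    then have "(n,n) \<in> \<sigma>^+" using trancl_mono[OF zip_trancl[of n n xs]] unfolding cyc_def by blast
    then show False using f unfolding directed_forest_def acyclic_def by blast
  qed
  moreover have "\<forall>y\<in>B. \<not> ((p y, y) \<in> \<sigma> \<and> (n, y) \<in> \<sigma>)"
    using f p_ne_n unfolding directed_forest_def by blast
  ultimately show "\<not> cyc n xs \<subseteq> \<sigma> \<and> (\<forall>y\<in>B. \<not> ((p y, y) \<in> \<sigma> \<and> (n, y) \<in> \<sigma>))" by blast
next
  assume c: "\<not> cyc n xs \<subseteq> \<sigma> \<and> (\<forall>y\<in>B. \<not> ((p y, y) \<in> \<sigma> \<and> (n, y) \<in> \<sigma>))"
  have indeg: "\<forall>x x' y. (x, y) \<in> \<sigma> \<and> (x', y) \<in> \<sigma> \<longrightarrow> x = x'"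
  proof (intro allI impI)
    fix x x' y assume xy: "(x, y) \<in> \<sigma> \<and> (x', y) \<in> \<sigma>"
    then have v: "(x,y) \<in> V" "(x',y) \<in> V" using sV by auto
    show "x = x'"
    proof (cases "y \<in> set L")
      case True
      then show ?thesis using edges_into_L[OF v(1)] edges_into_L[OF v(2)] cyc_uniq by blast
    next
      case False
      then have "y \<in> B" using v(1) unfolding Vset_def using cyc_snd by auto
      then show ?thesis using edges_into_B[OF v(1)] edges_into_B[OF v(2)] c xy by auto
    qed
  qed
  obtain j0 where j0: "j0 \<le> k" "(L!j0, M!j0) \<notin> \<sigma>" using c unfolding cyc_nth by auto
  define rk where "rk i = (if j0 < i then i - j0 - 1 else i + k - j0)" for i
  define r where "r x = (if x \<in> set L then rk (idx x) else Suc k + dep x)" for x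
  have rk_le: "i \<le> k \<Longrightarrow> rk i \<le> k" for i unfolding rk_def by auto
  have rL: "x \<in> set L \<Longrightarrow> r x \<le> k" for x
  proof -
    assume "x \<in> set L"
    then obtain i where "i < Suc k" "x = L!i" by (metis in_set_conv_nth length_Cons)
    then show "r x \<le> k" using rk_le idx_nth \<open>x \<in> set L\<close> unfolding r_def by auto
  qed
  have "\<forall>(a,b)\<in>\<sigma>. r a < r b"
  proof (clarify)
    fix a b assume ab: "(a,b) \<in> \<sigma>"
    then have abV: "(a,b) \<in> V" using sV by auto
    show "r a < r b"
    proof (cases "b \<in> set L")
      case True
      then have "(a,b) \<in> cyc n xs" using edges_into_L[OF abV] by simp
      then obtain i where i: "i \<le> k" "a = L!i" "b = M!i" unfolding cyc_nth by auto
      have "i \<noteq> j0" using i j0 ab by auto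
      have "a \<in> set L" using i nth_mem[of i L] by simp
      then have ra: "r a = rk i" unfolding r_def using i idx_nth by auto
      show ?thesis
      proof (cases "i < k")
        case True
        then have "b = L ! Suc i" using M_nth[OF i(1)] i by simp
        then have "r b = rk (Suc i)" unfolding r_def using True idx_nth[of "Suc i"] by auto
        then show ?thesis using ra \<open>i \<noteq> j0\<close> True j0(1) unfolding rk_def by auto
      next
        case False
        then have "i = k" using i by simp
        then have "b = L ! 0" using M_nth[OF i(1)] i by simp
        then have "r b = rk 0" unfolding r_def using idx_nth[of 0] by auto
        then show ?thesis using ra \<open>i \<noteq> j0\<close> \<open>i = k\<close> j0(1) unfolding rk_def by auto
      qed
    next
      case False
      then have bB: "b \<in> B" using abV cyc_snd unfolding Vset_def by auto
      have rb: "r b = Suc k + dep b" unfolding r_def using False by simp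
      show ?thesis
      proof (cases "a \<in> set L")
        case True then show ?thesis using rL rb by fastforce
      next
        case aL: False
        then have "a = p b" using edges_into_B[OF abV bB] by auto
        then have aB: "a \<in> B" using pB[OF bB] aL by auto
        have "dep a < dep b" unfolding dep_def \<open>a = p b\<close> by (rule dep_lt[OF pF AB bB])
        then show ?thesis using rb aL unfolding r_def by simp
      qed
    qed
  qed
  then have "acyclic \<sigma>" by (rule acyclic_rank)
  then show "directed_forest \<sigma>" unfolding directed_forest_def using indeg by blast
qed

lemma Kof_eq: "Kof n xs p = {\<sigma>. \<sigma> \<subseteq> V \<and> \<not> cyc n xs \<subseteq> \<sigma> \<and> (\<forall>y\<in>B. \<not> ((p y, y) \<in> \<sigma> \<and> (n, y) \<in> \<sigma>))}"
  unfolding Kof_def using forest_iff by blast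

lemma Union_Kof: "\<Union>(Kof n xs p) = V"
proof
  show "\<Union>(Kof n xs p) \<subseteq> V" unfolding Kof_def by auto
  show "V \<subseteq> \<Union>(Kof n xs p)"
  proof
    fix e assume e: "e \<in> V"
    obtain a b where ab: "e = (a,b)" by (cases e)
    have "{e} \<in> Kof n xs p" unfolding Kof_def using e ab V_ne forest_single by auto
    then show "e \<in> \<Union>(Kof n xs p)" by blast
  qed
qed

lemma Kof_complex: "simplicial_complex (Kof n xs p)"
  unfolding simplicial_complex_def Kof_def
proof (intro conjI ballI allI impI)
  show "{\<sigma>. \<sigma> \<subseteq> V \<and> directed_forest \<sigma>} \<noteq> {}"
    using forest_sub[OF forest_single[of 1 2]] by auto
next
  fix \<sigma> assume "\<sigma> \<in> {\<sigma>. \<sigma> \<subseteq> V \<and> directed_forest \<sigma>}"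
  then show "finite \<sigma>" using finV finite_subset by auto
next
  fix \<sigma> \<tau> assume "\<sigma> \<in> {\<sigma>. \<sigma> \<subseteq> V \<and> directed_forest \<sigma>}" "\<tau> \<subseteq> \<sigma>"
  then show "\<tau> \<in> {\<sigma>. \<sigma> \<subseteq> V \<and> directed_forest \<sigma>}" using forest_sub by auto
qed

lemma Kof_sub: "Kof n xs p \<subseteq> tree_complex n"
  unfolding Kof_def tree_complex_def using V_complete by auto

end


lemma Union_bip: "1 \<le> k \<Longrightarrow> \<Union>(bipyramid (simplex_boundary k) m) = WW k m"
proof
  show "\<Union>(bipyramid (simplex_boundary k) m) \<subseteq> WW k m"
  proof
    fix v assume "v \<in> \<Union>(bipyramid (simplex_boundary k) m)"
    then obtain S where S: "S \<in> bipyramid (simplex_boundary k) m" "v \<in> S" by blast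
    then show "v \<in> WW k m" unfolding bip_mem using notin_WW[of v k m] by (metis not_le)
  qed
  assume k: "1 \<le> k"
  show "WW k m \<subseteq> \<Union>(bipyramid (simplex_boundary k) m)"
  proof
    fix v assume v: "v \<in> WW k m"
    have "{v} \<in> bipyramid (simplex_boundary k) m"
    proof (cases v)
      case (Inl j)
      then have "j \<le> k" using v unfolding WW_def by auto
      moreover have "\<exists>j'\<le>k. Inl j' \<notin> {v}"
        using k Inl by (intro exI[of _ "if j = 0 then 1 else 0"]) auto
      ultimately show ?thesis unfolding bip_mem using Inl by auto
    next
      case (Inr q)
      then obtain i t where "v = Inr (i,t)" by (cases q) auto
      moreover then have "i < m" using v unfolding WW_def by auto
      ultimately show ?thesis unfolding bip_mem by auto
    qed
    then show "v \<in> \<Union>(bipyramid (simplex_boundary k) m)" by blast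
  qed
qed

lemma card_WW: "card (WW k m) = Suc k + 2 * m"
proof -
  have "card (WW k m) = card (Inl ` {..k} :: (nat + nat \<times> bool) set) + card (Inr ` ({..<m} \<times> (UNIV :: bool set)) :: (nat + nat \<times> bool) set)"
    unfolding WW_def by (rule card_Un_disjoint) auto
  also have "\<dots> = Suc k + 2 * m" by (simp add: card_image card_cartesian_product)
  finally show ?thesis .
qed

lemma bip_iso_gen:
  assumes k: "1 \<le> k" and F: "bij_betw F (WW k m) V"
  and K: "K = {\<sigma>. \<sigma> \<subseteq> V \<and> \<not> F ` (Inl ` {..k}) \<subseteq> \<sigma> \<and>
                 (\<forall>i<m. \<not> (F (Inr (i,True)) \<in> \<sigma> \<and> F (Inr (i,False)) \<in> \<sigma>))}"
  shows "simp_iso (bipyramid (simplex_boundary k) m) K"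
proof -
  have inj: "inj_on F (WW k m)" and img: "F ` WW k m = V" using F unfolding bij_betw_def by auto
  have injD: "\<And>w w'. w \<in> WW k m \<Longrightarrow> w' \<in> WW k m \<Longrightarrow> F w = F w' \<Longrightarrow> w = w'"
    using inj by (auto dest: inj_onD)
  have inWW: "\<And>S w. S \<in> bipyramid (simplex_boundary k) m \<Longrightarrow> w \<in> S \<Longrightarrow> w \<in> WW k m"
    using Union_bip[OF k] by blast
  have "(\<lambda>\<sigma>. F ` \<sigma>) ` bipyramid (simplex_boundary k) m = K"
  proof
    show "(\<lambda>\<sigma>. F ` \<sigma>) ` bipyramid (simplex_boundary k) m \<subseteq> K"
    proof clarify
      fix S assume S: "S \<in> bipyramid (simplex_boundary k) m"
      have SW: "S \<subseteq> WW k m" using inWW[OF S] by blast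
      have b: "\<exists>j\<le>k. Inl j \<notin> S" "\<forall>i. \<not> (Inr (i,True) \<in> S \<and> Inr (i,False) \<in> S)"
        using S unfolding bip_mem by auto
      have memS: "\<And>w. w \<in> WW k m \<Longrightarrow> F w \<in> F ` S \<Longrightarrow> w \<in> S"
        using SW injD by blast
      have WInl: "\<And>j. j \<le> k \<Longrightarrow> Inl j \<in> WW k m" unfolding WW_def by auto
      have WInr: "\<And>i t. i < m \<Longrightarrow> Inr (i,t) \<in> WW k m" unfolding WW_def by auto
      have "F ` S \<subseteq> V" using SW img by blast
      moreover have "\<not> F ` (Inl ` {..k}) \<subseteq> F ` S"
        using b(1) memS WInl by blast
      moreover have "\<forall>i<m. \<not> (F (Inr (i,True)) \<in> F ` S \<and> F (Inr (i,False)) \<in> F ` S)"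
        using b(2) memS WInr by blast
      ultimately show "F ` S \<in> K" unfolding K by blast
    qed
    show "K \<subseteq> (\<lambda>\<sigma>. F ` \<sigma>) ` bipyramid (simplex_boundary k) m"
    proof
      fix \<sigma> assume "\<sigma> \<in> K"
      then have s: "\<sigma> \<subseteq> V" "\<not> F ` (Inl ` {..k}) \<subseteq> \<sigma>"
        "\<forall>i<m. \<not> (F (Inr (i,True)) \<in> \<sigma> \<and> F (Inr (i,False)) \<in> \<sigma>)" unfolding K by auto
      let ?S = "{w \<in> WW k m. F w \<in> \<sigma>}"
      have "F ` ?S = \<sigma>" using s(1) img by blast
      moreover have "?S \<in> bipyramid (simplex_boundary k) m"
        unfolding bip_mem
      proof (intro conjI allI impI)
        fix j assume "Inl j \<in> ?S" then show "j \<le> k" unfolding WW_def by auto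
      next
        show "\<exists>j\<le>k. Inl j \<notin> ?S" using s(2) by auto
      next
        fix i t assume "Inr (i,t) \<in> ?S" then show "i < m" unfolding WW_def by auto
      next
        fix i show "\<not> (Inr (i,True) \<in> ?S \<and> Inr (i,False) \<in> ?S)" using s(3) unfolding WW_def by auto
      qed
      ultimately show "\<sigma> \<in> (\<lambda>\<sigma>. F ` \<sigma>) ` bipyramid (simplex_boundary k) m" by blast
    qed
  qed
  then show ?thesis unfolding simp_iso_def Union_bip[OF k] using inj by blast
qed

context par
begin

lemma card_B: "card B = (n - 1) - k"
proof -
  have "card B = card {1..n-1} - card (set xs)" unfolding Bs_def by (rule card_Diff_subset) (use sub in auto)
  then show ?thesis using distinct_card[OF dist] by simp
qed

lemma k_le: "k \<le> n - 1"
proof -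
  have "card (set xs) \<le> card {1..n-1}" by (rule card_mono) (use sub in auto)
  then show ?thesis using distinct_card[OF dist] by simp
qed

definition FF :: "(nat \<Rightarrow> nat) \<Rightarrow> nat + nat \<times> bool \<Rightarrow> nat \<times> nat" where
  "FF b w = (case w of Inl j \<Rightarrow> (L!j, M!j) | Inr (i, t) \<Rightarrow> if t then (p (b i), b i) else (n, b i))"

lemma M_in: "j \<le> k \<Longrightarrow> M!j \<in> set L"
  using nth_mem[of j M] by (simp add: less_Suc_eq_le)

lemma FF_bij:
  assumes b: "bij_betw b {..<card B} B"
  shows "bij_betw (FF b) (WW k (card B)) V"
  unfolding bij_betw_def
proof
  have bB: "b ` {..<card B} = B" and bi: "inj_on b {..<card B}" using b unfolding bij_betw_def by auto
  have bin: "\<And>i. i < card B \<Longrightarrow> b i \<in> B" using bB by blast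
  show "inj_on (FF b) (WW k (card B))"
  proof (rule inj_onI)
    fix w w' assume w: "w \<in> WW k (card B)" and w': "w' \<in> WW k (card B)" and eq: "FF b w = FF b w'"
    show "w = w'"
    proof (cases w)
      case (Inl j)
      then have j: "j \<le> k" using w unfolding WW_def by auto
      show ?thesis
      proof (cases w')
        case (Inl j')
        then have j': "j' \<le> k" using w' unfolding WW_def by auto
        have "L!j = L!j'" using eq \<open>w = Inl j\<close> Inl by (simp add: FF_def)
        then have "j = j'" using distL j j' by (simp add: nth_eq_iff_index_eq)
        then show ?thesis using \<open>w = Inl j\<close> Inl by simp
      next
        case (Inr q)
        then obtain i t where it: "w' = Inr (i,t)" by (cases q) auto
        then have "i < card B" using w' unfolding WW_def by auto
        then have "b i \<in> B" by (rule bin)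
        moreover have "M!j = b i" using eq \<open>w = Inl j\<close> it by (cases t) (auto simp: FF_def)
        ultimately show ?thesis using M_in[OF j] B_disj by auto
      qed
    next
      case (Inr q)
      then obtain i t where it: "w = Inr (i,t)" by (cases q) auto
      then have i: "i < card B" using w unfolding WW_def by auto
      show ?thesis
      proof (cases w')
        case (Inl j)
        then have j: "j \<le> k" using w' unfolding WW_def by auto
        have "M!j = b i" using eq \<open>w' = Inl j\<close> it by (cases t) (auto simp: FF_def)
        then show ?thesis using M_in[OF j] B_disj bin[OF i] by auto
      next
        case (Inr q')
        then obtain i' t' where it': "w' = Inr (i',t')" by (cases q') auto
        then have i': "i' < card B" using w' unfolding WW_def by auto
        have "b i = b i'" using eq it it' by (cases t; cases t') (auto simp: FF_def)
        then have ii: "i = i'" using bi i i' by (auto dest: inj_onD)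
        have "t = t'" using eq it it' ii p_ne_n[OF bin[OF i]] by (cases t; cases t') (auto simp: FF_def)
        then show ?thesis using it it' ii by simp
      qed
    qed
  qed
  have c: "FF b ` (Inl ` {..k}) = cyc n xs" unfolding cyc_img by (simp add: image_image FF_def)
  have e1: "\<And>t. {..<card B} \<times> {t} = (\<lambda>i. (i,t)) ` {..<card B}" by auto
  have "FF b ` (Inr ` ({..<card B} \<times> {True})) = (\<lambda>y. (p y, y)) ` (b ` {..<card B})"
    unfolding e1 image_image by (simp add: FF_def)
  then have d1: "FF b ` (Inr ` ({..<card B} \<times> {True})) = (\<lambda>y. (p y, y)) ` B" using bB by simp
  have "FF b ` (Inr ` ({..<card B} \<times> {False})) = (\<lambda>y. (n, y)) ` (b ` {..<card B})"
    unfolding e1 image_image by (simp add: FF_def)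
  then have d2: "FF b ` (Inr ` ({..<card B} \<times> {False})) = (\<lambda>y. (n, y)) ` B" using bB by simp
  have "WW k (card B) = Inl ` {..k} \<union> Inr ` ({..<card B} \<times> {True}) \<union> Inr ` ({..<card B} \<times> {False})"
    unfolding WW_def by (auto simp: UNIV_bool)
  then show "FF b ` WW k (card B) = V" unfolding Vset_def using c d1 d2 by (simp add: image_Un)
qed

lemma Kof_iso: "simp_iso (Kof n xs p) (bipyramid (simplex_boundary k) (card B))"
proof -
  obtain b where b0: "bij_betw b {0..<card B} B" using ex_bij_betw_nat_finite[OF finB] by blast
  then have b: "bij_betw b {..<card B} B" by (simp add: lessThan_atLeast0)
  have bB: "b ` {..<card B} = B" using b unfolding bij_betw_def by auto
  have c: "FF b ` (Inl ` {..k}) = cyc n xs" unfolding cyc_img by (simp add: image_image FF_def)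
  have eq: "Kof n xs p = {\<sigma>. \<sigma> \<subseteq> V \<and> \<not> FF b ` (Inl ` {..k}) \<subseteq> \<sigma> \<and>
                 (\<forall>i<card B. \<not> (FF b (Inr (i,True)) \<in> \<sigma> \<and> FF b (Inr (i,False)) \<in> \<sigma>))}"
  proof -
    have "\<And>\<sigma>. (\<forall>y\<in>B. \<not> ((p y, y) \<in> \<sigma> \<and> (n, y) \<in> \<sigma>)) \<longleftrightarrow>
        (\<forall>i<card B. \<not> (FF b (Inr (i,True)) \<in> \<sigma> \<and> FF b (Inr (i,False)) \<in> \<sigma>))"
    proof -
      fix \<sigma>
      have "(\<forall>y\<in>B. \<not> ((p y, y) \<in> \<sigma> \<and> (n, y) \<in> \<sigma>)) \<longleftrightarrow>
            (\<forall>y\<in>b ` {..<card B}. \<not> ((p y, y) \<in> \<sigma> \<and> (n, y) \<in> \<sigma>))" using bB by simp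
      also have "\<dots> \<longleftrightarrow> (\<forall>i<card B. \<not> (FF b (Inr (i,True)) \<in> \<sigma> \<and> FF b (Inr (i,False)) \<in> \<sigma>))"
        by (auto simp: FF_def)
      finally show "?thesis \<sigma>" .
    qed
    then show ?thesis unfolding Kof_eq c by blast
  qed
  show ?thesis by (rule iso_sym[OF bip_iso_gen[OF k_pos FF_bij[OF b] eq]])
qed

lemma Kof_sphere: "simplicial_sphere (Kof n xs p) (int n - 2)"
proof -
  have "realization (Kof n xs p) homeomorphic_space realization (bipyramid (simplex_boundary k) (card B))"
    by (rule iso_real[OF Kof_iso])
  also have "\<dots> homeomorphic_space nsphere (k - 1 + card B)" by (rule bip_sphere[OF k_pos])
  also have "k - 1 + card B = nat (int n - 2)" using card_B k_le k_pos n2 by simp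
  finally show ?thesis unfolding simplicial_sphere_def using Kof_complex n2 by simp
qed

end


lemma zip_inj:
  "distinct (a#xs) \<Longrightarrow> distinct (a#ys) \<Longrightarrow> n \<notin> set xs \<Longrightarrow> n \<notin> set ys \<Longrightarrow>
   set (zip (a#xs) (xs@[n])) = set (zip (a#ys) (ys@[n])) \<Longrightarrow> xs = ys"
proof (induction xs arbitrary: a ys)
  case Nil
  show ?case
  proof (cases ys)
    case (Cons y ys')
    then have "(a,y) \<in> set (zip (a#ys) (ys@[n]))" by simp
    then show ?thesis using Nil Cons by auto
  qed simp
next
  case (Cons x xs)
  show ?case
  proof (cases ys)
    case Nil
    have "(a,x) \<in> set (zip (a#x#xs) ((x#xs)@[n]))" by simp
    then show ?thesis using Cons.prems Nil by auto
  next
    case (Cons y ys')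
    have L: "set (zip (a#x#xs) ((x#xs)@[n])) = insert (a,x) (set (zip (x#xs) (xs@[n])))" by simp
    have R: "set (zip (a#y#ys') ((y#ys')@[n])) = insert (a,y) (set (zip (y#ys') (ys'@[n])))" by simp
    have aL: "(a,z) \<notin> set (zip (x#xs) (xs@[n]))" for z
      using Cons.prems(1) set_zip_leftD by fastforce
    have aR: "(a,z) \<notin> set (zip (y#ys') (ys'@[n]))" for z
      using Cons.prems(2) Cons set_zip_leftD by fastforce
    have "(a,x) \<in> set (zip (a#x#xs) ((x#xs)@[n]))" by simp
    then have "(a,x) \<in> set (zip (a#ys) (ys@[n]))" by (simp only: Cons.prems(5))
    then have "(a,x) \<in> insert (a,y) (set (zip (y#ys') (ys'@[n])))" using Cons R by simp
    then have xy: "x = y" using aR by auto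
    have "set (zip (x#xs) (xs@[n])) = set (zip (y#ys') (ys'@[n]))"
    proof -
      have "insert (a,x) (set (zip (x#xs) (xs@[n]))) = insert (a,x) (set (zip (y#ys') (ys'@[n])))"
        using Cons.prems(5) Cons L R xy by simp
      then show ?thesis using aL[of x] aR[of x] by (metis insert_ident)
    qed
    then have "xs = ys'" using Cons.IH[of x ys'] Cons.prems Cons xy by auto
    then show ?thesis using Cons xy by simp
  qed
qed

context par
begin

lemma setxs_char: "set xs = {y \<in> {1..n-1}. \<forall>a a'. (a,y) \<in> V \<and> (a',y) \<in> V \<longrightarrow> a = a'}"
proof
  show "set xs \<subseteq> {y \<in> {1..n-1}. \<forall>a a'. (a,y) \<in> V \<and> (a',y) \<in> V \<longrightarrow> a = a'}"
  proof
    fix y assume y: "y \<in> set xs"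
    have "\<forall>a a'. (a,y) \<in> V \<and> (a',y) \<in> V \<longrightarrow> a = a'"
    proof (intro allI impI)
      fix a a' assume "(a,y) \<in> V \<and> (a',y) \<in> V"
      moreover have "y \<in> set L" using y by simp
      ultimately have "(a,y) \<in> cyc n xs" "(a',y) \<in> cyc n xs" using edges_into_L by blast+
      then show "a = a'" by (rule cyc_uniq)
    qed
    moreover have "y \<in> {1..n-1}" using y sub by blast
    ultimately show "y \<in> {y \<in> {1..n-1}. \<forall>a a'. (a,y) \<in> V \<and> (a',y) \<in> V \<longrightarrow> a = a'}" by blast
  qed
  show "{y \<in> {1..n-1}. \<forall>a a'. (a,y) \<in> V \<and> (a',y) \<in> V \<longrightarrow> a = a'} \<subseteq> set xs"
  proof
    fix y assume y: "y \<in> {y \<in> {1..n-1}. \<forall>a a'. (a,y) \<in> V \<and> (a',y) \<in> V \<longrightarrow> a = a'}"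
    show "y \<in> set xs"
    proof (rule ccontr)
      assume "y \<notin> set xs"
      then have yB: "y \<in> B" using y unfolding Bs_def by auto
      then have "(p y, y) \<in> V" "(n, y) \<in> V" unfolding Vset_def by auto
      then show False using y p_ne_n[OF yB] by auto
    qed
  qed
qed

lemma cyc_char: "cyc n xs = {e \<in> V. snd e \<in> set L}"
proof
  show "cyc n xs \<subseteq> {e \<in> V. snd e \<in> set L}"
  proof
    fix e assume e: "e \<in> cyc n xs"
    obtain a b where ab: "e = (a,b)" by (cases e)
    have "b \<in> set L" using cyc_snd e ab by blast
    moreover have "e \<in> V" using e unfolding Vset_def by blast
    ultimately show "e \<in> {e \<in> V. snd e \<in> set L}" using ab by simp
  qed
  show "{e \<in> V. snd e \<in> set L} \<subseteq> cyc n xs" using edges_into_L by auto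
qed

lemma p_char: "p = (\<lambda>y. if y \<in> B then (THE a. (a,y) \<in> V \<and> a \<noteq> n) else 0)"
proof
  fix y
  show "p y = (if y \<in> B then (THE a. (a,y) \<in> V \<and> a \<noteq> n) else 0)"
  proof (cases "y \<in> B")
    case True
    have "(THE a. (a,y) \<in> V \<and> a \<noteq> n) = p y"
    proof (rule the_equality)
      show "(p y, y) \<in> V \<and> p y \<noteq> n" using True p_ne_n unfolding Vset_def by auto
      show "\<And>a. (a, y) \<in> V \<and> a \<noteq> n \<Longrightarrow> a = p y" using edges_into_B True by blast
    qed
    then show ?thesis using True by simp
  next
    case False
    then show ?thesis using pF unfolding FOR_def by auto
  qed
qed

end

lemma Kof_inj:
  assumes P: "par n xs p" and Q: "par n ys q" and eq: "Kof n xs p = Kof n ys q"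
  shows "xs = ys \<and> p = q"
proof -
  have V: "Vset n xs p = Vset n ys q" using par.Union_Kof[OF P] par.Union_Kof[OF Q] eq by metis
  have s: "set xs = set ys" using par.setxs_char[OF P] par.setxs_char[OF Q] V by simp
  have "cyc n xs = cyc n ys" using par.cyc_char[OF P] par.cyc_char[OF Q] V s by simp
  then have xy: "xs = ys"
    unfolding cyc_def
    using zip_inj[of n xs ys n] par.distL[OF P] par.distL[OF Q] par.n_notin[OF P] par.n_notin[OF Q] by simp
  have "p y = q y" for y
  proof -
    have "p y = (if y \<in> Bs n xs then THE a. (a,y) \<in> Vset n xs p \<and> a \<noteq> n else 0)"
      using fun_cong[OF par.p_char[OF P], of y] .
    also have "\<dots> = (if y \<in> Bs n ys then THE a. (a,y) \<in> Vset n ys q \<and> a \<noteq> n else 0)"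
      using V xy by simp
    also have "\<dots> = q y" using fun_cong[OF par.p_char[OF Q], of y] by simp
    finally show ?thesis .
  qed
  then have "p = q" by blast
  then show ?thesis using xy by simp
qed

section \<open>Covering\<close>

lemma chain_trancl:
  assumes "\<forall>i<b. (c (Suc i), c i) \<in> E" "a < b"
  shows "(c b, c a) \<in> E^+"
  using assms
proof (induction b)
  case 0 then show ?case by simp
next
  case (Suc b)
  show ?case
  proof (cases "a = b")
    case True then show ?thesis using Suc.prems by auto
  next
    case False
    then have "(c b, c a) \<in> E^+" using Suc by auto
    moreover have "(c (Suc b), c b) \<in> E" using Suc.prems by auto
    ultimately show ?thesis by (rule trancl_into_trancl2[rotated])
  qed
qed

lemma inf_chain:
  assumes S: "finite S" "\<forall>i. c i \<in> S" and E: "\<forall>i. (c (Suc i), c i) \<in> E"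
  shows "\<not> acyclic E"
proof
  assume ac: "acyclic E"
  have "\<not> inj_on c {..card S}"
  proof
    assume "inj_on c {..card S}"
    then have "card {..card S} \<le> card S" using card_inj_on_le S by blast
    then show False by simp
  qed
  then obtain a b where ab: "a \<le> card S" "b \<le> card S" "a \<noteq> b" "c a = c b"
    unfolding inj_on_def by auto
  have "\<And>a b. a < b \<Longrightarrow> c a = c b \<Longrightarrow> False"
  proof -
    fix a b :: nat assume "a < b" "c a = c b"
    then have "(c b, c a) \<in> E^+" using chain_trancl[of b c E a] E by auto
    then show False using ac \<open>c a = c b\<close> unfolding acyclic_def by auto
  qed
  then show False using ab by (metis nat_neq_iff)
qed

locale cover =
  fixes n :: nat and E :: "(nat \<times> nat) set"
  assumes n2: "2 \<le> n" and Etc: "E \<in> tree_complex n"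
begin

lemma Esub: "E \<subseteq> complete_digraph_edges n" using Etc unfolding tree_complex_def by auto
lemma Efor: "directed_forest E" using Etc unfolding tree_complex_def by auto
lemma Eacyc: "acyclic E" using Efor unfolding directed_forest_def by auto
lemma Euniq: "(x,y) \<in> E \<Longrightarrow> (x',y) \<in> E \<Longrightarrow> x = x'" using Efor unfolding directed_forest_def by auto
lemma Eedge: "(x,y) \<in> E \<Longrightarrow> x \<in> {1..n} \<and> y \<in> {1..n} \<and> x \<noteq> y"
  using Esub unfolding complete_digraph_edges_def by auto

definition hasin :: "nat \<Rightarrow> bool" where "hasin y \<longleftrightarrow> (\<exists>z. (z,y) \<in> E)"
definition pa :: "nat \<Rightarrow> nat" where "pa y = (if hasin y then (THE z. (z,y) \<in> E) else y)"

lemma par_edge: "hasin y \<Longrightarrow> (pa y, y) \<in> E"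
  unfolding pa_def hasin_def using Euniq by (auto intro: theI2)

lemma par_eq: "(z,y) \<in> E \<Longrightarrow> pa y = z"
  using par_edge Euniq unfolding hasin_def by blast

definition up :: "nat \<Rightarrow> nat \<Rightarrow> nat" where "up x i = (pa^^i) x"

lemma up_Suc: "up x (Suc i) = pa (up x i)" unfolding up_def by simp

lemma up_in: "x \<in> {1..n} \<Longrightarrow> up x i \<in> {1..n}"
proof (induction i)
  case 0 then show ?case by (simp add: up_def)
next
  case (Suc i)
  then show ?case unfolding up_Suc par_def using par_edge[of "up x i"] Eedge
    by (metis pa_def)
qed

lemma root_ex:
  assumes x: "x \<in> {1..n}"
  shows "\<exists>j. \<not> hasin (up x j) \<and> (\<forall>i<j. hasin (up x i))"
proof -
  have "\<exists>j. \<not> hasin (up x j)"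
  proof (rule ccontr)
    assume "\<not> (\<exists>j. \<not> hasin (up x j))"
    then have "\<forall>i. (up x (Suc i), up x i) \<in> E" using par_edge up_Suc by auto
    moreover have "\<forall>i. up x i \<in> {1..n}" using up_in[OF x] by auto
    ultimately show False using inf_chain[of "{1..n}" "up x" E] Eacyc by auto
  qed
  then show ?thesis using exists_least_iff[of "\<lambda>j. \<not> hasin (up x j)"] by auto
qed

lemma up_chain: "\<forall>i<j. hasin (up x i) \<Longrightarrow> \<forall>i<j. (up x (Suc i), up x i) \<in> E"
  using par_edge up_Suc by auto

lemma up_dist:
  assumes "\<forall>i<j. hasin (up x i)" "a \<le> j" "b \<le> j" "a \<noteq> b"
  shows "up x a \<noteq> up x b"
proof
  assume eq: "up x a = up x b"
  have ch: "\<forall>i<j. (up x (Suc i), up x i) \<in> E" using up_chain[OF assms(1)] .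
  have "\<And>a b. a < b \<Longrightarrow> b \<le> j \<Longrightarrow> up x a = up x b \<Longrightarrow> False"
  proof -
    fix a b assume "a < b" "b \<le> j" "up x a = up x b"
    then have "(up x b, up x a) \<in> E^+" using chain_trancl[of b "up x" E a] ch by auto
    then show False using Eacyc \<open>up x a = up x b\<close> unfolding acyclic_def by auto
  qed
  then show False using assms(2-4) eq by (metis nat_neq_iff)
qed

lemma build:
  assumes dist: "distinct xs" and sub: "set xs \<subseteq> {1..n-1}" and ne: "xs \<noteq> []"
  and a: "\<not> cyc n xs \<subseteq> E"
  and b: "\<And>x y. (x,y) \<in> E \<Longrightarrow> y \<in> set (n#xs) \<Longrightarrow> (x,y) \<in> cyc n xs"
  shows "\<exists>p. par n xs p \<and> E \<in> Kof n xs p"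
proof -
  let ?B = "Bs n xs"
  define p where "p y = (if y \<in> ?B then (if hasin y \<and> pa y \<noteq> n then pa y else hd xs) else 0)" for y
  have hd: "hd xs \<in> set xs" using ne by simp
  have nB: "n \<notin> ?B" unfolding Bs_def using n2 by auto
  have pB: "y \<in> ?B \<Longrightarrow> p y \<in> set xs \<union> ?B" for y
  proof -
    assume y: "y \<in> ?B"
    show "p y \<in> set xs \<union> ?B"
    proof (cases "hasin y \<and> pa y \<noteq> n")
      case True
      then have "pa y \<in> {1..n}" using par_edge Eedge by blast
      then have "pa y \<in> {1..n-1}" using True by auto
      then show ?thesis using True y unfolding p_def Bs_def by auto
    next
      case False then show ?thesis using y hd unfolding p_def by auto
    qed
  qed
  have pF: "p \<in> FOR (set xs) ?B"
    unfolding FOR_def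
  proof (intro CollectI conjI ballI allI impI)
    fix y assume y: "y \<in> ?B"
    show "p y \<in> set xs \<union> ?B" using pB[OF y] .
    show "\<exists>j. (p^^j) y \<in> set xs"
    proof (rule ccontr)
      assume no: "\<not> (\<exists>j. (p^^j) y \<in> set xs)"
      have inB: "(p^^j) y \<in> ?B" for j
      proof (induction j)
        case 0 then show ?case using y by simp
      next
        case (Suc j)
        have e: "(p^^Suc j) y = p ((p^^j) y)" by simp
        have "p ((p^^j) y) \<in> set xs \<union> ?B" using pB[OF Suc.IH] .
        moreover have "(p^^Suc j) y \<notin> set xs" using no by blast
        ultimately show ?case using e by auto
      qed
      have "((p^^Suc j) y, (p^^j) y) \<in> E" for j
      proof -
        let ?z = "(p^^j) y"
        have zB: "?z \<in> ?B" by (rule inB)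
        have "p ?z \<notin> set xs" using no by (metis funpow.simps(2) o_apply)
        then have "hasin ?z \<and> pa ?z \<noteq> n" using zB hd unfolding p_def by (auto split: if_splits)
        then have "(p ?z, ?z) \<in> E" using zB par_edge unfolding p_def by auto
        then show ?thesis by simp
      qed
      moreover have "finite ?B" unfolding Bs_def by simp
      ultimately show False using inf_chain[of ?B "\<lambda>j. (p^^j) y" E] inB Eacyc by auto
    qed
  next
    fix y assume "y \<notin> ?B" then show "p y = 0" unfolding p_def by auto
  qed
  have P: "par n xs p" using n2 dist sub ne pF by unfold_locales
  have "E \<subseteq> Vset n xs p"
  proof
    fix e assume e: "e \<in> E"
    obtain x y where xy: "e = (x,y)" by (cases e)
    show "e \<in> Vset n xs p"
    proof (cases "y \<in> set (n#xs)")
      case True then show ?thesis using b e xy unfolding Vset_def by auto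
    next
      case False
      have "y \<in> {1..n}" "x \<in> {1..n}" using Eedge e xy by auto
      then have yB: "y \<in> ?B" using False unfolding Bs_def by auto
      have h: "hasin y" "pa y = x" using e xy par_eq unfolding hasin_def by auto
      show ?thesis
      proof (cases "x = n")
        case True then show ?thesis using yB xy unfolding Vset_def by auto
      next
        case False
        then have "p y = x" using h yB unfolding p_def by auto
        then show ?thesis using yB xy unfolding Vset_def by force
      qed
    qed
  qed
  then have "E \<in> Kof n xs p" unfolding Kof_def using Efor by auto
  then show ?thesis using P by blast
qed

lemma cover_main: "\<exists>xs p. par n xs p \<and> E \<in> Kof n xs p"
proof (cases "hasin n")
  case True
  have nn: "n \<in> {1..n}" using n2 by auto
  obtain j where j: "\<not> hasin (up n j)" "\<forall>i<j. hasin (up n i)" using root_ex[OF nn] by blast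
  have j0: "j \<noteq> 0" using j True by (cases j) (auto simp: up_def)
  have u0: "up n 0 = n" by (simp add: up_def)
  define xs where "xs = map (\<lambda>i. up n (j - i)) [0..<j]"
  have len: "length xs = j" unfolding xs_def by simp
  have xs_nth: "i < j \<Longrightarrow> xs ! i = up n (j - i)" for i unfolding xs_def by simp
  have setxs: "set xs = (\<lambda>i. up n i) ` {1..j}"
  proof -
    have "set xs = (\<lambda>i. up n (j - i)) ` {0..<j}" unfolding xs_def by simp
    also have "\<dots> = (\<lambda>i. up n i) ` {1..j}"
    proof
      show "(\<lambda>i. up n (j - i)) ` {0..<j} \<subseteq> (\<lambda>i. up n i) ` {1..j}" by auto
      show "(\<lambda>i. up n i) ` {1..j} \<subseteq> (\<lambda>i. up n (j - i)) ` {0..<j}"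
      proof
        fix z assume "z \<in> (\<lambda>i. up n i) ` {1..j}"
        then obtain i where i: "i \<in> {1..j}" "z = up n i" by auto
        then have "z = up n (j - (j - i))" "j - i \<in> {0..<j}" by auto
        then show "z \<in> (\<lambda>i. up n (j - i)) ` {0..<j}" by blast
      qed
    qed
    finally show ?thesis .
  qed
  have ud: "\<And>a b. a \<le> j \<Longrightarrow> b \<le> j \<Longrightarrow> a \<noteq> b \<Longrightarrow> up n a \<noteq> up n b" using up_dist[OF j(2)] by blast
  have dist: "distinct xs"
    unfolding distinct_conv_nth len
  proof (intro allI impI)
    fix a b assume "a < j" "b < j" "a \<noteq> b"
    then show "xs ! a \<noteq> xs ! b" using xs_nth ud[of "j - a" "j - b"] by auto
  qed
  have nnot: "n \<notin> set xs" unfolding setxs using ud[of 0] u0 by fastforce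
  have sub: "set xs \<subseteq> {1..n-1}"
  proof
    fix z assume z: "z \<in> set xs"
    then have "z \<in> {1..n}" using up_in[OF nn] unfolding setxs by auto
    moreover have "z \<noteq> n" using z nnot by auto
    ultimately show "z \<in> {1..n-1}" by auto
  qed
  have ne: "xs \<noteq> []" using len j0 by auto
  have a: "\<not> cyc n xs \<subseteq> E"
  proof
    assume "cyc n xs \<subseteq> E"
    moreover have "(n, xs ! 0) \<in> cyc n xs" unfolding cyc_def using ne by (cases xs) auto
    ultimately have "hasin (xs ! 0)" unfolding hasin_def by blast
    then show False using j(1) xs_nth[of 0] j0 by simp
  qed
  have b: "(x,y) \<in> cyc n xs" if xy: "(x,y) \<in> E" "y \<in> set (n#xs)" for x y
  proof -
    have "y \<in> (\<lambda>i. up n i) ` {0..j}"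
    proof (cases "y = n")
      case True then show ?thesis using u0 by force
    next
      case False then have "y \<in> set xs" using xy(2) by simp
      then show ?thesis unfolding setxs by auto
    qed
    then obtain i where i: "i \<le> j" "y = up n i" by auto
    have "i \<noteq> j" using j(1) xy(1) i unfolding hasin_def by auto
    then have ij: "i < j" using i by simp
    have x: "x = up n (Suc i)" using par_eq[OF xy(1)] i up_Suc by simp
    let ?t = "j - i"
    have cnth: "cyc n xs = {((n#xs)!t, (xs@[n])!t) | t. t \<le> length xs}"
      unfolding cyc_def set_zip by (auto simp: less_Suc_eq_le)
    have t1: "j - i = Suc (j - i - 1)" using ij by arith
    have t2: "j - (j - i - 1) = Suc i" using ij by arith
    have "(n#xs) ! ?t = xs ! (j - i - 1)" using t1 by (metis nth_Cons_Suc)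
    also have "\<dots> = up n (j - (j - i - 1))" using xs_nth[of "j - i - 1"] ij by simp
    finally have e1: "(n#xs) ! ?t = up n (Suc i)" unfolding t2 .
    have e2: "(xs@[n]) ! ?t = up n i"
    proof (cases "i = 0")
      case True then show ?thesis using len u0 by (simp add: nth_append)
    next
      case False then show ?thesis using len xs_nth[of ?t] ij by (simp add: nth_append)
    qed
    have "j - i \<le> length xs" using len by simp
    then have "((n#xs) ! (j - i), (xs@[n]) ! (j - i)) \<in> cyc n xs" unfolding cnth by blast
    then show ?thesis using e1 e2 x i by simp
  qed
  show ?thesis using build[OF dist sub ne a b] by blast
next
  case False
  have n1: "1 \<in> {1..n}" using n2 by auto
  obtain a where a: "a \<in> {1..n}" "a \<noteq> n" "\<And>z. (z,a) \<in> E \<Longrightarrow> z = n"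
  proof (cases "\<exists>c. (n,c) \<in> E")
    case True
    then obtain c where c: "(n,c) \<in> E" by blast
    then show ?thesis using that[of c] Eedge Euniq by blast
  next
    case nc: False
    obtain j where j: "\<not> hasin (up 1 j)" "\<forall>i<j. hasin (up 1 i)" using root_ex[OF n1] by blast
    have "up 1 j \<noteq> n"
    proof (cases j)
      case 0 then show ?thesis using n2 by (simp add: up_def)
    next
      case (Suc j')
      then have "(up 1 j, up 1 j') \<in> E" using up_chain[OF j(2)] by auto
      then show ?thesis using nc by auto
    qed
    moreover have "\<And>z. (z, up 1 j) \<in> E \<Longrightarrow> z = n" using j(1) unfolding hasin_def by auto
    ultimately show ?thesis using that[of "up 1 j"] up_in[OF n1] by blast
  qed
  have cy: "cyc n [a] = {(n,a),(a,n)}" unfolding cyc_def by auto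
  have "\<exists>p. par n [a] p \<and> E \<in> Kof n [a] p"
  proof (rule build[of "[a]"])
    show "distinct [a]" by simp
    show "set [a] \<subseteq> {1..n-1}" using a by auto
    show "[a] \<noteq> []" by simp
    show "\<not> cyc n [a] \<subseteq> E" using False unfolding cy hasin_def by auto
    show "(x,y) \<in> cyc n [a]" if "(x,y) \<in> E" "y \<in> set [n,a]" for x y
      using that False a(3) unfolding cy hasin_def by auto
  qed
  then show ?thesis by blast
qed

end


definition LS :: "nat \<Rightarrow> nat \<Rightarrow> nat list set" where
  "LS N k = {xs. length xs = k \<and> distinct xs \<and> set xs \<subseteq> {1..N}}"

definition ff :: "nat \<Rightarrow> nat \<Rightarrow> nat" where "ff N k = \<Prod>{N - k + 1..N}"

definition cnt :: "nat \<Rightarrow> nat \<Rightarrow> nat" where "cnt N k = ff N k * Fc k (N - k)"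

lemma finite_LS: "finite (LS N k)"
  unfolding LS_def
  by (rule finite_subset[OF _ finite_lists_length_eq[of "{1..N}" k]]) auto

lemma card_LS: "k \<le> N \<Longrightarrow> card (LS N k) = ff N k"
  unfolding LS_def ff_def using card_lists_distinct_length_eq[of "{1..N}" k] by simp

lemma Par_Sigma: "Par n k = (SIGMA xs:LS (n-1) k. FOR (set xs) (Bs n xs))"
  unfolding Par_def LS_def by auto

lemma card_Par:
  assumes "k \<le> n - 1"
  shows "card (Par n k) = cnt (n-1) k" and "finite (Par n k)"
proof -
  have fin: "\<forall>xs\<in>LS (n-1) k. finite (FOR (set xs) (Bs n xs))"
    using finite_FOR unfolding Bs_def by simp
  have c: "card (FOR (set xs) (Bs n xs)) = Fc k (n - 1 - k)" if "xs \<in> LS (n-1) k" for xs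
  proof -
    have x: "length xs = k" "distinct xs" "set xs \<subseteq> {1..n-1}" using that unfolding LS_def by auto
    have "card (Bs n xs) = (n - 1) - k"
      unfolding Bs_def using card_Diff_subset[OF _ x(3)] distinct_card[OF x(2)] x(1) by simp
    moreover have "card (set xs) = k" using distinct_card[OF x(2)] x(1) by simp
    ultimately show ?thesis using card_FOR[of "set xs" "Bs n xs"] unfolding Bs_def by auto
  qed
  have "card (Par n k) = (\<Sum>xs\<in>LS (n-1) k. card (FOR (set xs) (Bs n xs)))"
    unfolding Par_Sigma using finite_LS fin by simp
  also have "\<dots> = (\<Sum>xs\<in>LS (n-1) k. Fc k (n - 1 - k))" by (rule sum.cong) (auto simp: c)
  also have "\<dots> = cnt (n-1) k" using card_LS[OF assms] unfolding cnt_def by simp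
  finally show "card (Par n k) = cnt (n-1) k" .
  show "finite (Par n k)" unfolding Par_Sigma using finite_LS fin by auto
qed

lemma ff_Suc: "k < N \<Longrightarrow> ff N (Suc k) = (N - k) * ff N k"
proof -
  assume k: "k < N"
  have "N - Suc k + 1 = N - k" using k by simp
  then have "ff N (Suc k) = \<Prod>{N - k..N}" unfolding ff_def by simp
  also have "\<dots> = (N - k) * \<Prod>{Suc (N - k)..N}" by (rule prod.atLeast_Suc_atMost) simp
  also have "Suc (N - k) = N - k + 1" by simp
  finally show ?thesis unfolding ff_def by simp
qed

lemma cnt_sum:
  assumes N: "1 \<le> N"
  shows "(\<Sum>k\<in>{1..N}. cnt N k) = N ^ N"
proof -
  define T where "T k = (if k \<le> N then int (ff N k * N ^ (N - k)) else 0)" for k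
  have step: "int (cnt N k) = T k - T (Suc k)" if k: "1 \<le> k" "k \<le> N" for k
  proof (cases "k < N")
    case True
    have sk: "N - k = Suc (N - Suc k)" using True by simp
    have e1: "int (ff N k * N ^ (N - k)) = int (ff N k) * int N * int N ^ (N - Suc k)"
      by (subst sk) (simp add: algebra_simps)
    have e2: "int ((N - k) * ff N k * N ^ (N - Suc k)) = (int N - int k) * int (ff N k) * int N ^ (N - Suc k)"
      using True by (simp add: of_nat_diff)
    have "T k - T (Suc k) = int (ff N k * N ^ (N - k)) - int ((N - k) * ff N k * N ^ (N - Suc k))"
      unfolding T_def using True ff_Suc[OF True] by simp
    also have "\<dots> = int k * int (ff N k) * int N ^ (N - Suc k)"
      unfolding e1 e2 by (simp add: algebra_simps)
    finally have a: "T k - T (Suc k) = int k * int (ff N k) * int N ^ (N - Suc k)" .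
    have "cnt N k = ff N k * (k * N ^ (N - Suc k))"
      unfolding cnt_def Fc_def using True by simp
    then show ?thesis using a by (simp add: algebra_simps)
  next
    case False
    then have "k = N" using k by simp
    then show ?thesis unfolding T_def cnt_def Fc_def by simp
  qed
  have "int (\<Sum>k\<in>{1..N}. cnt N k) = (\<Sum>k\<in>{1..N}. T k - T (Suc k))"
    by (simp add: step)
  also have "\<dots> = (\<Sum>k = 1..<Suc N. (- T (Suc k)) - (- T k))"
    by (rule sum.cong) auto
  also have "\<dots> = - T (Suc N) - (- T 1)" by (rule sum_Suc_diff') simp
  also have "\<dots> = int (N ^ N)"
  proof -
    have "ff N 1 = N" unfolding ff_def using N by simp
    then have "T 1 = int (N * N ^ (N - 1))" unfolding T_def using N by simp
    also have "N * N ^ (N - 1) = N ^ N" using N by (cases N) auto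
    finally show ?thesis unfolding T_def by simp
  qed
  finally show ?thesis by (simp only: of_nat_eq_iff)
qed

lemma cnt_real:
  assumes k: "1 \<le> k" "k \<le> n - 1" and n: "2 \<le> n"
  shows "real (cnt (n-1) k) = real (fact (n - 1)) / real (fact (n - k - 1)) * real k
                * real (n - 1) powi (int n - int k - 2)"
proof -
  let ?N = "n - 1"
  have f: "fact ?N = fact (?N - k) * \<Prod>{Suc (?N - k)..?N}" by (rule fact_eq_fact_times) simp
  have ffr: "real (ff ?N k) = real (fact (n - 1)) / real (fact (n - k - 1))"
  proof -
    have "real (fact ?N) = real (fact (?N - k)) * real (ff ?N k)"
      unfolding ff_def using f by simp
    moreover have "real (fact (?N - k)) > 0" by simp
    moreover have "n - k - 1 = ?N - k" by simp
    ultimately show ?thesis by (simp add: field_simps)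
  qed
  show ?thesis
  proof (cases "k = ?N")
    case True
    have "int n - int k - 2 = -1" using True n by simp
    moreover have "real k * real (n-1) powi (-1) = 1" using True k by (simp add: power_int_minus)
    ultimately show ?thesis unfolding cnt_def Fc_def using True ffr by simp
  next
    case False
    then have lt: "k < ?N" using k by simp
    have e: "int n - int k - 2 = int (?N - k - 1)" using lt n by arith
    have kk: "k + (?N - k) = ?N" "?N - k \<noteq> 0" using lt by auto
    have "Fc k (?N - k) = k * ?N ^ (?N - k - 1)" unfolding Fc_def kk(1) using kk(2) by simp
    then show ?thesis unfolding cnt_def e using ffr by simp
  qed
qed

lemma par_Par: "par n xs p \<Longrightarrow> (xs, p) \<in> Par n (length xs) \<and> 1 \<le> length xs \<and> length xs \<le> n - 1"
  using par.k_pos par.k_le unfolding Par_def par_def by auto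

lemma Par_par: "(xs,p) \<in> Par n k \<Longrightarrow> 1 \<le> k \<Longrightarrow> 2 \<le> n \<Longrightarrow> par n xs p"
  unfolding Par_def par_def by auto

theorem mainTheorem4:
  fixes n :: nat
  assumes "n \<ge> 1"
  shows "\<exists>\<F> :: (nat \<times> nat) set set set.
           card \<F> = (n - 1) ^ (n - 1)
         \<and> (\<forall>K\<in>\<F>. subcomplex K (tree_complex n))
         \<and> \<Union>\<F> = tree_complex n
         \<and> (\<forall>K\<in>\<F>. simplicial_sphere K (int n - 2))
         \<and> (\<forall>k. 0 < k \<and> k < n \<longrightarrow>
              real (card {K\<in>\<F>. simp_iso K (bipyramid (simplex_boundary k) (n - k - 1))})
              = real (fact (n - 1)) / real (fact (n - k - 1)) * real k
                * real (n - 1) powi (int n - int k - 2))"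
proof (cases "n = 1")
  case True
  have tc: "tree_complex 1 = {{}}"
    unfolding tree_complex_def complete_digraph_edges_def directed_forest_def by (auto simp: acyclic_def)
  have sc: "simplicial_complex {{}}" unfolding simplicial_complex_def by auto
  show ?thesis
    apply (rule exI[of _ "{{{}}}"])
    using True tc sc unfolding subcomplex_def simplicial_sphere_def by (auto simp: acyclic_def)
next
  case False
  then have n2: "2 \<le> n" using assms by simp
  let ?N = "n - 1"
  define PP where "PP = (\<Union>k\<in>{1..?N}. Par n k)"
  define G where "G = (\<lambda>(xs, p). Kof n xs p)"
  define Fam where "Fam = G ` PP"
  have PPpar: "x \<in> PP \<Longrightarrow> par n (fst x) (snd x)" for x
    unfolding PP_def using Par_par n2 by (cases x) auto
  have injG: "inj_on G PP"
  proof (rule inj_onI)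
    fix x y assume "x \<in> PP" "y \<in> PP" "G x = G y"
    then show "x = y" using Kof_inj[OF PPpar PPpar] unfolding G_def
      by (cases x; cases y) auto
  qed
  have cardPP: "card PP = ?N ^ ?N"
  proof -
    have "card PP = (\<Sum>k\<in>{1..?N}. card (Par n k))"
      unfolding PP_def
    proof (rule card_UN_disjoint)
      show "finite {1..?N}" by simp
      show "\<forall>k\<in>{1..?N}. finite (Par n k)" using card_Par(2) by auto
      show "\<forall>k\<in>{1..?N}. \<forall>j\<in>{1..?N}. k \<noteq> j \<longrightarrow> Par n k \<inter> Par n j = {}"
        unfolding Par_def by auto
    qed
    also have "\<dots> = (\<Sum>k\<in>{1..?N}. cnt ?N k)" by (rule sum.cong) (auto simp: card_Par(1))
    also have "\<dots> = ?N ^ ?N" by (rule cnt_sum) (use n2 in simp)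
    finally show ?thesis .
  qed
  have memFam: "K \<in> Fam \<longleftrightarrow> (\<exists>xs p. par n xs p \<and> K = Kof n xs p)" for K
  proof
    assume "K \<in> Fam"
    then obtain x where x: "x \<in> PP" "K = G x" unfolding Fam_def by auto
    obtain a b where ab: "x = (a,b)" by (cases x)
    have "par n a b" using PPpar[OF x(1)] ab by simp
    moreover have "K = Kof n a b" using x(2) ab unfolding G_def by simp
    ultimately show "\<exists>xs p. par n xs p \<and> K = Kof n xs p" by blast
  next
    assume "\<exists>xs p. par n xs p \<and> K = Kof n xs p"
    then obtain xs p where P: "par n xs p" "K = Kof n xs p" by blast
    then have xp: "(xs,p) \<in> PP" using par_Par[OF P(1)] unfolding PP_def by auto
    have "G (xs,p) = K" using P(2) unfolding G_def by simp
    then show "K \<in> Fam" unfolding Fam_def using xp by (metis imageI)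
  qed
  have "card Fam = card PP" unfolding Fam_def by (rule card_image[OF injG])
  then have c1: "card Fam = ?N ^ ?N" using cardPP by simp
  have c2: "\<forall>K\<in>Fam. subcomplex K (tree_complex n)"
  proof
    fix K assume "K \<in> Fam"
    then obtain xs p where P: "par n xs p" "K = Kof n xs p" using memFam by blast
    then show "subcomplex K (tree_complex n)"
      unfolding subcomplex_def using par.Kof_complex[OF P(1)] par.Kof_sub[OF P(1)] by simp
  qed
  have c3: "\<Union>Fam = tree_complex n"
  proof
    show "\<Union>Fam \<subseteq> tree_complex n"
    proof
      fix E assume "E \<in> \<Union>Fam"
      then obtain K where K: "K \<in> Fam" "E \<in> K" by blast
      then obtain xs p where P: "par n xs p" "K = Kof n xs p" using memFam by blast
      then show "E \<in> tree_complex n" using par.Kof_sub[OF P(1)] K(2) by blast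
    qed
    show "tree_complex n \<subseteq> \<Union>Fam"
    proof
      fix E assume "E \<in> tree_complex n"
      then interpret cover n E using n2 by unfold_locales
      obtain xs p where "par n xs p" "E \<in> Kof n xs p" using cover_main by blast
      then have "Kof n xs p \<in> Fam" using memFam by blast
      then show "E \<in> \<Union>Fam" using \<open>E \<in> Kof n xs p\<close> by blast
    qed
  qed
  have c4: "\<forall>K\<in>Fam. simplicial_sphere K (int n - 2)"
  proof
    fix K assume "K \<in> Fam"
    then obtain xs p where P: "par n xs p" "K = Kof n xs p" using memFam by blast
    then show "simplicial_sphere K (int n - 2)" using par.Kof_sphere[OF P(1)] by simp
  qed
  have c5: "real (card {K\<in>Fam. simp_iso K (bipyramid (simplex_boundary k) (n - k - 1))})
              = real (fact (n - 1)) / real (fact (n - k - 1)) * real k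
                * real (n - 1) powi (int n - int k - 2)" if k: "0 < k" "k < n" for k
  proof -
    have k1: "1 \<le> k" "k \<le> ?N" using k by auto
    have "{K\<in>Fam. simp_iso K (bipyramid (simplex_boundary k) (n - k - 1))} = G ` Par n k"
    proof
      show "{K\<in>Fam. simp_iso K (bipyramid (simplex_boundary k) (n - k - 1))} \<subseteq> G ` Par n k"
      proof clarify
        fix K assume K: "K \<in> Fam" "simp_iso K (bipyramid (simplex_boundary k) (n - k - 1))"
        then obtain xs p where P: "par n xs p" "K = Kof n xs p" using memFam by blast
        let ?k = "length xs"
        have PP': "(xs,p) \<in> Par n ?k" "1 \<le> ?k" "?k \<le> ?N" using par_Par[OF P(1)] by auto
        have i2: "simp_iso K (bipyramid (simplex_boundary ?k) (?N - ?k))"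
          using par.Kof_iso[OF P(1)] par.card_B[OF P(1)] P(2) by simp
        have "card (\<Union>K) = card (\<Union>(bipyramid (simplex_boundary k) (n - k - 1)))" by (rule iso_card[OF K(2)])
        also have "\<dots> = Suc k + 2 * (?N - k)" using Union_bip[OF k1(1)] card_WW by simp
        finally have a1: "card (\<Union>K) = Suc k + 2 * (?N - k)" .
        have "card (\<Union>K) = Suc ?k + 2 * (?N - ?k)" using iso_card[OF i2] Union_bip[OF PP'(2)] card_WW by simp
        then have "?k = k" using a1 k1 PP'(3) by simp
        then show "K \<in> G ` Par n k" using PP'(1) P(2) unfolding G_def by force
      qed
      show "G ` Par n k \<subseteq> {K\<in>Fam. simp_iso K (bipyramid (simplex_boundary k) (n - k - 1))}"
      proof clarify
        fix xs p assume x: "(xs,p) \<in> Par n k"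
        have P: "par n xs p" using Par_par[OF x k1(1) n2] .
        have len: "length xs = k" using x unfolding Par_def by auto
        have "G (xs,p) \<in> Fam" using memFam P unfolding G_def by auto
        moreover have "simp_iso (G (xs,p)) (bipyramid (simplex_boundary k) (n - k - 1))"
          using par.Kof_iso[OF P] par.card_B[OF P] len unfolding G_def by simp
        ultimately show "G (xs,p) \<in> Fam \<and> simp_iso (G (xs,p)) (bipyramid (simplex_boundary k) (n - k - 1))" by blast
      qed
    qed
    moreover have "inj_on G (Par n k)" using injG unfolding PP_def
      by (rule inj_on_subset) (use k1 in auto)
    then have "card (G ` Par n k) = card (Par n k)" by (rule card_image)
    ultimately have h: "card {K\<in>Fam. simp_iso K (bipyramid (simplex_boundary k) (n - k - 1))} = cnt ?N k"
      using card_Par(1)[OF k1(2)] by simp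
    show ?thesis by (simp only: h cnt_real[OF k1 n2])
  qed
  show ?thesis
  proof (intro exI[of _ Fam] conjI allI impI)
    show "card Fam = ?N ^ ?N" by (rule c1)
    show "\<forall>K\<in>Fam. subcomplex K (tree_complex n)" by (rule c2)
    show "\<Union>Fam = tree_complex n" by (rule c3)
    show "\<forall>K\<in>Fam. simplicial_sphere K (int n - 2)" by (rule c4)
    fix k assume "0 < k \<and> k < n"
    then show "real (card {K\<in>Fam. simp_iso K (bipyramid (simplex_boundary k) (n - k - 1))})
              = real (fact (n - 1)) / real (fact (n - k - 1)) * real k
                * real (n - 1) powi (int n - int k - 2)" using c5 by blast
  qed
qed


end
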